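(* Let $M$ and $M'$ be lists of integers, and let $\lambda$, $n$ and $m\ge3$ be positive integers. Suppose there is an $(M)$-packing of $\lambda K_n$ whose leave has an $(M',m,2)$-flower as its only nontrivial connected component. Then there is an $(M,3)$-packing of $\lambda K_n$ whose leave has an $(M',m-1)$-flower as its only nontrivial connected component.
   Context: Graphs may have multiple edges but no loops. $\lambda K_n$ is the complete multigraph on $n$ vertices with $\lambda$ edges joining each pair of distinct vertices. For $m\ge 2$, an $m$-cycle is a cycle with $m$ edges; a $2$-cycle consists of two parallel edges. A list is a finite multiset of integers. $(M,M')$ denotes the concatenation (multiset union) of lists $M$ and $M'$, and $(M,a,b)$ denotes $M$ with entries $a,b$ appended. Let $K$ be a graph and let $M=(m_1,\dots,m_t)$ be a list with every $m_i\ge 2$. If every vertex of $K$ has even degree, an $(M)$-decomposition of $K$ is a decomposition $\{G_1,\dots,G_t\}$ of $K$ in which $G_i$ is an $m_i$-cycle for each $i$. If every vertex of $K$ has odd degree, an $(M)$-decomposition of $K$ is a decomposition $\{G_1,\dots,G_t,I\}$ of $K$ in which $G_i$ is an $m_i$-cycle for each $i$ and $I$ is a perfect matching. An $(M)$-packing of $\lambda K_n$ is an $(M)$-decomposition of a subgraph $G$ of $\lambda K_n$, where $G$ has all degrees even if $\lambda(n-1)$ is even and all degrees odd if $\lambda(n-1)$ is odd. Its leave is $\lambda K_n-G$, i.e. the graph on the same vertex set whose edges are those of $\lambda K_n$ not in $G$. A connected component is nontrivial if it has at least one edge. For integers $a_1,\dots,a_s\ge2$ with $s\ge1$, an $(a_1,\dots,a_s)$-flower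 is a graph that is the union of cycles $A_1,\dots,A_s$ such that $A_i$ has length $a_i$ for each $i$, and, if $s\ge2$, there is a vertex $x$ with $V(A_i)\cap V(A_j)=\{x\}$ for all $i\ne j$. *)

theory Defs
  imports Main "HOL-Library.Multiset"
begin

text \<open>Multigraphs on the vertex set {0..<n} are represented by multisets of edges;
an edge is a two-element set of vertices.\<close>

type_synonym mgraph = "nat set multiset"

definition edges_Kn :: "nat \<Rightarrow> nat set set" where
  "edges_Kn n = {e. \<exists>i j. i < j \<and> j < n \<and> e = {i, j}}"

definition lamKn :: "nat \<Rightarrow> nat \<Rightarrow> mgraph" where
  "lamKn lam n = (\<Sum>e\<in>edges_Kn n. replicate_mset lam e)"

definition deg :: "mgraph \<Rightarrow> nat \<Rightarrow> nat" where
  "deg G v = size (filter_mset (\<lambda>e. v \<in> e) G)"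

text \<open>The cycle through the distinct vertices vs (in this cyclic order);
for length 2 this gives two parallel edges.\<close>
definition cycle_edges :: "nat list \<Rightarrow> mgraph" where
  "cycle_edges vs = mset (map (\<lambda>i. {vs ! i, vs ! ((i + 1) mod length vs)}) [0..<length vs])"

definition is_cycle_list :: "nat list \<Rightarrow> bool" where
  "is_cycle_list vs \<longleftrightarrow> length vs \<ge> 2 \<and> distinct vs"

definition perfect_matching :: "nat \<Rightarrow> mgraph \<Rightarrow> bool" where
  "perfect_matching n I \<longleftrightarrow>
     (\<forall>e\<in>#I. \<exists>i j. i \<noteq> j \<and> i < n \<and> j < n \<and> e = {i, j}) \<and> (\<forall>v<n. deg I v = 1)"

definition M_decomposition :: "nat \<Rightarrow> int multiset \<Rightarrow> mgraph \<Rightarrow> bool" where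
  "M_decomposition n M K \<longleftrightarrow>
     ((\<forall>v<n. even (deg K v)) \<and>
        (\<exists>Cs. (\<forall>vs\<in>set Cs. is_cycle_list vs) \<and> mset (map (\<lambda>vs. int (length vs)) Cs) = M \<and>
              K = sum_list (map cycle_edges Cs)))
   \<or> ((\<forall>v<n. odd (deg K v)) \<and>
        (\<exists>Cs I. (\<forall>vs\<in>set Cs. is_cycle_list vs) \<and> mset (map (\<lambda>vs. int (length vs)) Cs) = M \<and>
              perfect_matching n I \<and> K = sum_list (map cycle_edges Cs) + I))"

definition packing_with_leave :: "nat \<Rightarrow> nat \<Rightarrow> int multiset \<Rightarrow> mgraph \<Rightarrow> bool" where
  "packing_with_leave lam n M L \<longleftrightarrow>
     (\<exists>G. G \<subseteq># lamKn lam n \<and> L = lamKn lam n - G \<and>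
          (if even (lam * (n - 1)) then (\<forall>v<n. even (deg G v)) else (\<forall>v<n. odd (deg G v))) \<and>
          M_decomposition n M G)"

definition is_flower :: "int multiset \<Rightarrow> mgraph \<Rightarrow> bool" where
  "is_flower A F \<longleftrightarrow>
     (\<exists>Cs. Cs \<noteq> [] \<and> (\<forall>vs\<in>set Cs. is_cycle_list vs) \<and>
           mset (map (\<lambda>vs. int (length vs)) Cs) = A \<and>
           F = sum_list (map cycle_edges Cs) \<and>
           (length Cs \<ge> 2 \<longrightarrow>
              (\<exists>x. \<forall>i<length Cs. \<forall>j<length Cs. i \<noteq> j \<longrightarrow> set (Cs ! i) \<inter> set (Cs ! j) = {x})))"

text \<open>"The leave L has F as its only nontrivial connected component", where F is
connected: the edge multiset of L is exactly that of F.\<close>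
definition leave_is_flower :: "int multiset \<Rightarrow> mgraph \<Rightarrow> bool" where
  "leave_is_flower A L \<longleftrightarrow> is_flower A L"

end

theory Submission
  imports Defs
begin


fun pe :: "nat list \<Rightarrow> nat set multiset" where
  "pe (a # b # r) = add_mset {a, b} (pe (b # r))"
| "pe _ = {#}"

lemma pe_append: "pe (xs @ y # ys) = pe (xs @ [y]) + pe (y # ys)"
proof (induction xs rule: pe.induct)
  case (1 a b r)
  then show ?case by simp
next
  case ("2_1") then show ?case by simp
next
  case ("2_2" v) then show ?case by (cases ys) auto
qed

lemma pe_rev: "pe (rev xs) = pe xs"
proof (induction xs rule: pe.induct)
  case (1 a b r)
  have "pe (rev (a # b # r)) = pe (rev r @ b # [a])" by simp
  also have "\<dots> = pe (rev r @ [b]) + pe [b, a]" by (rule pe_append)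
  also have "\<dots> = pe (b # r) + {#{a,b}#}" using 1 by (simp add: insert_commute)
  finally show ?case by simp
qed auto

lemma pe_mid: "P \<noteq> [] \<Longrightarrow> pe (a # P @ [b]) = add_mset {a, hd P} (add_mset {last P, b} (pe P))"
proof -
  assume "P \<noteq> []"
  then obtain c Q where P: "P = c # Q" by (cases P) auto
  have "pe (a # P @ [b]) = add_mset {a, c} (pe (c # Q @ [b]))" by (simp add: P)
  also have "pe (c # Q @ [b]) = pe ((c # Q) @ [b])" by simp
  also have "\<dots> = pe (butlast (c#Q) @ last (c # Q) # [b])"
    by (metis append_butlast_last_id list.distinct(1) append.assoc append_Cons append_Nil)
  also have "\<dots> = pe (butlast (c#Q) @ [last (c#Q)]) + pe [last (c#Q), b]" by (rule pe_append)
  also have "butlast (c#Q) @ [last (c#Q)] = c # Q" by (rule append_butlast_last_id) simp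
  finally show ?thesis by (simp add: P)
qed

lemma pe_sub: "e \<in># pe xs \<Longrightarrow> e \<subseteq> set xs"
  by (induction xs rule: pe.induct) auto

lemma pe_nth: "pe xs = mset (map (\<lambda>i. {xs ! i, xs ! (i + 1)}) [0..<length xs - 1])"
proof (induction xs rule: pe.induct)
  case (1 a b r)
  have "[0..<length (a # b # r) - 1] = 0 # map Suc [0..<length (b # r) - 1]"
    by (simp add: upt_conv_Cons map_Suc_upt del: upt_Suc)
  then show ?case using 1 by (simp add: comp_def)
qed auto

lemma cycle_edges_pe: "c \<noteq> [] \<Longrightarrow> cycle_edges c = pe (c @ [hd c])"
proof -
  assume c: "c \<noteq> []"
  have "pe (c @ [hd c]) = mset (map (\<lambda>i. {(c @ [hd c]) ! i, (c @ [hd c]) ! (i + 1)}) [0..<length c])"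
    by (simp add: pe_nth)
  also have "map (\<lambda>i. {(c @ [hd c]) ! i, (c @ [hd c]) ! (i + 1)}) [0..<length c]
     = map (\<lambda>i. {c ! i, c ! ((i + 1) mod length c)}) [0..<length c]"
  proof (rule map_cong[OF refl])
    fix i assume "i \<in> set [0..<length c]"
    then have i: "i < length c" by simp
    show "{(c @ [hd c]) ! i, (c @ [hd c]) ! (i + 1)} = {c ! i, c ! ((i + 1) mod length c)}"
    proof (cases "i + 1 = length c")
      case True
      then show ?thesis using i c by (simp add: nth_append hd_conv_nth)
    next
      case False
      then show ?thesis using i by (simp add: nth_append)
    qed
  qed
  finally show ?thesis by (simp add: cycle_edges_def)
qed

lemma cycle_edges_Cons: "cycle_edges (a # r) = pe (a # r @ [a])"
  by (simp add: cycle_edges_pe)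

lemma cycle_edges_rotate1: "cycle_edges (rotate1 c) = cycle_edges c"
proof (cases c)
  case Nil then show ?thesis by simp
next
  case (Cons a r)
  show ?thesis
  proof (cases r)
    case Nil then show ?thesis using Cons by simp
  next
    case (Cons b r')
    have "cycle_edges (rotate1 c) = pe (b # r' @ [a] @ [b])"
      using \<open>c = a # r\<close> Cons by (simp add: cycle_edges_pe)
    also have "\<dots> = pe (b # r' @ [a]) + pe [a, b]" using pe_append[of "b#r'" a "[b]"] by simp
    also have "cycle_edges c = pe (a # b # r' @ [a])" using \<open>c = a # r\<close> Cons by (simp add: cycle_edges_pe)
    ultimately show ?thesis by simp
  qed
qed

lemma cycle_edges_rotate: "cycle_edges (rotate n c) = cycle_edges c"
  by (induction n) (simp_all add: cycle_edges_rotate1)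

lemma cycle_edges_sub: "e \<in># cycle_edges c \<Longrightarrow> e \<subseteq> set c"
proof -
  assume "e \<in># cycle_edges c"
  then obtain i where i: "i < length c" and e: "e = {c ! i, c ! ((i + 1) mod length c)}"
    by (auto simp: cycle_edges_def)
  have "(i + 1) mod length c < length c" using i by (intro mod_less_divisor) auto
  then show ?thesis using i e by (auto intro: nth_mem)
qed

lemma cycle_edges_rot_decomp: "cycle_edges (xs @ y # ys) = cycle_edges (y # ys @ xs)"
  by (metis rotate_append cycle_edges_rotate append_Cons)

lemma cycle_edges_length: "size (cycle_edges c) = length c"
  by (simp add: cycle_edges_def)

lemma cycle_edges_two: "cycle_edges [x, y] = {#{x,y},{x,y}#}"
  by (simp add: cycle_edges_def insert_commute)

lemma deg_plus[simp]: "deg (A + B) v = deg A v + deg B v"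
  by (simp add: deg_def)

lemma deg_add_mset[simp]: "deg (add_mset e A) v = (if v \<in> e then 1 else 0) + deg A v"
  by (simp add: deg_def)

lemma deg_empty[simp]: "deg {#} v = 0"
  by (simp add: deg_def)

lemma deg_pe: "(\<forall>i < length xs - 1. xs ! i \<noteq> xs ! (i+1)) \<Longrightarrow> xs \<noteq> [] \<Longrightarrow>
   deg (pe xs) v + (if hd xs = v then 1 else 0) + (if last xs = v then 1 else 0) = 2 * count (mset xs) v"
proof (induction xs rule: pe.induct)
  case (1 a b r)
  have ab: "a \<noteq> b" using "1.prems"(1)[rule_format, of 0] by simp
  have "\<forall>i < length (b # r) - 1. (b # r) ! i \<noteq> (b # r) ! (i+1)"
  proof (intro allI impI)
    fix i assume "i < length (b # r) - 1"
    then show "(b # r) ! i \<noteq> (b # r) ! (i+1)" using "1.prems"(1)[rule_format, of "Suc i"] by simp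
  qed
  then have IH: "deg (pe (b # r)) v + (if b = v then 1 else 0) + (if last (b # r) = v then 1 else 0) = 2 * count (mset (b # r)) v"
    using 1 by simp
  show ?case using IH ab by auto
qed auto

lemma deg_cycle_even: "is_cycle_list c \<Longrightarrow> even (deg (cycle_edges c) v)"
proof -
  assume c: "is_cycle_list c"
  then have d: "distinct c" and l: "length c \<ge> 2" by (auto simp: is_cycle_list_def)
  let ?xs = "c @ [hd c]"
  have ne: "c \<noteq> []" using l by auto
  have "\<forall>i < length ?xs - 1. ?xs ! i \<noteq> ?xs ! (i+1)"
  proof (intro allI impI)
    fix i assume i: "i < length ?xs - 1"
    show "?xs ! i \<noteq> ?xs ! (i+1)"
    proof (cases "i + 1 = length c")
      case True
      then have "?xs ! i = c ! i" "?xs ! (i+1) = c ! 0" using ne by (auto simp: nth_append hd_conv_nth)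
      moreover have "c ! i \<noteq> c ! 0" using d l True by (subst nth_eq_iff_index_eq) auto
      ultimately show ?thesis by simp
    next
      case False
      then have "?xs ! i = c ! i" "?xs ! (i+1) = c ! (i+1)" using i by (auto simp: nth_append)
      moreover have "c ! i \<noteq> c ! (i+1)" using d i False by (simp add: nth_eq_iff_index_eq)
      ultimately show ?thesis by simp
    qed
  qed
  from deg_pe[OF this] ne have "deg (pe ?xs) v + (if hd c = v then 1 else 0) + (if hd c = v then 1 else 0) = 2 * count (mset ?xs) v"
    by simp
  then have "even (deg (pe ?xs) v)" by presburger
  then show ?thesis using ne by (simp add: cycle_edges_pe)
qed

lemma deg_sum_list_even: "\<forall>c\<in>set Cs. is_cycle_list c \<Longrightarrow> even (deg (sum_list (map cycle_edges Cs)) v)"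
  by (induction Cs) (auto simp: deg_cycle_even)




lemma sub_image_mset_set:
  "finite N \<Longrightarrow> A \<subseteq># image_mset g (mset_set N) \<Longrightarrow> \<exists>D\<subseteq>N. image_mset g (mset_set D) = A"
proof (induction A arbitrary: N)
  case empty
  then show ?case by (intro exI[of _ "{}"]) auto
next
  case (add a A)
  have "a \<in># image_mset g (mset_set N)" using add.prems(2)
    by (meson mset_subset_eq_insertD)
  then obtain z where z: "z \<in> N" "g z = a" using add.prems(1) by auto
  have "mset_set N = add_mset z (mset_set (N - {z}))"
    using z add.prems(1) by (metis mset_set.remove)
  then have "image_mset g (mset_set N) = add_mset a (image_mset g (mset_set (N - {z})))"
    using z by simp
  then have "A \<subseteq># image_mset g (mset_set (N - {z}))" using add.prems(2) by simp
  then obtain D where D: "D \<subseteq> N - {z}" "image_mset g (mset_set D) = A"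
    using add.IH[of "N - {z}"] add.prems(1) by auto
  have fD: "finite D" using D(1) add.prems(1) finite_subset by blast
  have "z \<notin> D" using D(1) by auto
  then have "mset_set (insert z D) = add_mset z (mset_set D)" using fD by simp
  then show ?case using D z by (intro exI[of _ "insert z D"]) auto
qed

lemma path_lemma:
  fixes N :: "'n set" and f :: "'n \<Rightarrow> 'n" and lab :: "'n \<Rightarrow> 'l" and fl :: "'l \<Rightarrow> 'l"
  assumes "finite N" "D \<subseteq> N" "d \<in> D"
    and "\<forall>a\<in>N. f a \<in> N \<and> f (f a) = a \<and> f a \<noteq> a"
    and "\<forall>a\<in>N. fl (lab a) \<noteq> lab a" and "\<forall>l. fl (fl l) = l"
    and "image_mset fl (image_mset lab (mset_set (N - D))) = image_mset lab (mset_set (N - D))"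
  shows "\<exists>S\<subseteq>N. d \<in> S \<and> (\<forall>a\<in>S. f a \<in> S) \<and> card (S \<inter> D) = 2 \<and>
     image_mset fl (image_mset lab (mset_set (S - D))) = image_mset lab (mset_set (S - D))"
  using assms
proof (induction "card N" arbitrary: N f rule: less_induct)
  case less
  note fN = less.prems(1) and DN = less.prems(2) and dD = less.prems(3) and finv = less.prems(4)
    and labf = less.prems(5) and flf = less.prems(6) and bal = less.prems(7)
  have dN: "d \<in> N" using dD DN by auto
  define a where "a = f d"
  have aN: "a \<in> N" and fa: "f a = d" and ad: "a \<noteq> d" using finv dN by (auto simp: a_def)
  show ?case
  proof (cases "a \<in> D")
    case True
    have "{d, a} \<inter> D = {d, a}" using True dD by auto
    then have c: "card ({d, a} \<inter> D) = 2" using ad by simp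
    have "{d,a} - D = {}" using True dD by auto
    then show ?thesis using c dN aN fa by (intro exI[of _ "{d,a}"]) (auto simp: a_def)
  next
    case False
    have "lab a \<in># image_mset lab (mset_set (N - D))" using False aN fN by auto
    then have "fl (lab a) \<in># image_mset fl (image_mset lab (mset_set (N - D)))" by simp
    then have "fl (lab a) \<in># image_mset lab (mset_set (N - D))" using bal by simp
    then obtain b where bND: "b \<in> N - D" and lb: "lab b = fl (lab a)" using fN by auto
    have ba: "b \<noteq> a" using lb labf aN by force
    have bd: "b \<noteq> d" using bND dD by auto
    define c where "c = f b"
    have cN: "c \<in> N" and fc: "f c = b" and cb: "c \<noteq> b" using finv bND by (auto simp: c_def)
    have ca: "c \<noteq> a" using fc fa bd by auto
    have cd: "c \<noteq> d" using fc a_def ba by auto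
    define N' where "N' = N - {a, b}"
    define f' where "f' = (f(d := c))(c := d)"
    have fN': "finite N'" using fN by (simp add: N'_def)
    have lt: "card N' < card N" using aN fN by (auto simp: N'_def intro: psubset_card_mono)
    have DN': "D \<subseteq> N'" using DN False bND by (auto simp: N'_def)
    have f'd: "f' d = c" using cd by (simp add: f'_def)
    have f'c: "f' c = d" by (simp add: f'_def)
    have f'z: "f' z = f z" if "z \<noteq> c" "z \<noteq> d" for z using that by (simp add: f'_def)
    have finv': "\<forall>z\<in>N'. f' z \<in> N' \<and> f' (f' z) = z \<and> f' z \<noteq> z"
    proof
      fix z assume zN': "z \<in> N'"
      show "f' z \<in> N' \<and> f' (f' z) = z \<and> f' z \<noteq> z"
      proof (cases "z = d")
        case True
        then show ?thesis using f'd f'c cN ca cb cd by (auto simp: N'_def)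
      next
        case zd: False
        show ?thesis
        proof (cases "z = c")
          case True
          then show ?thesis using f'd f'c dN ad bd cd zd by (auto simp: N'_def)
        next
          case zc: False
          have zN: "z \<in> N" "z \<noteq> a" "z \<noteq> b" using zN' by (auto simp: N'_def)
          have fzN: "f z \<in> N" "f (f z) = z" "f z \<noteq> z" using finv zN by auto
          have "f z \<noteq> a" using fzN fa zd by metis
          moreover have "f z \<noteq> b" using fzN c_def zc by metis
          moreover have "f z \<noteq> c" using fzN fc zN by metis
          moreover have "f z \<noteq> d" using fzN a_def zN by metis
          ultimately show ?thesis using f'z[OF zc zd] f'z[of "f z"] fzN by (auto simp: N'_def)
        qed
      qed
    qed
    have labf': "\<forall>z\<in>N'. fl (lab z) \<noteq> lab z" using labf by (auto simp: N'_def)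
    have decomp: "mset_set (N - D) = add_mset a (add_mset b (mset_set (N' - D)))"
    proof -
      have "N - D = insert a (insert b (N' - D))" using aN False bND ba by (auto simp: N'_def)
      moreover have "a \<notin> insert b (N' - D)" "b \<notin> N' - D" using ba by (auto simp: N'_def)
      ultimately show ?thesis using fN by (simp add: N'_def)
    qed
    have pairinv: "image_mset fl {#lab a, lab b#} = {#lab a, lab b#}" using lb flf by simp
    have bal': "image_mset fl (image_mset lab (mset_set (N' - D))) = image_mset lab (mset_set (N' - D))"
    proof -
      have "image_mset fl (image_mset lab (mset_set (N' - D))) + {#fl (lab a), fl (lab b)#} = image_mset lab (mset_set (N' - D)) + {#lab a, lab b#}"
        using bal unfolding decomp by simp
      moreover have "{#fl (lab a), fl (lab b)#} = {#lab a, lab b#}" using pairinv by simp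
      ultimately show ?thesis by (metis add_right_cancel)
    qed
    obtain S' where S': "S' \<subseteq> N'" "d \<in> S'" "\<forall>z\<in>S'. f' z \<in> S'" "card (S' \<inter> D) = 2"
      "image_mset fl (image_mset lab (mset_set (S' - D))) = image_mset lab (mset_set (S' - D))"
      using less.hyps[OF lt fN' DN' dD finv' labf' flf bal'] by blast
    define S where "S = insert a (insert b S')"
    have cS': "c \<in> S'" using S'(2,3) f'd by force
    have SN: "S \<subseteq> N" using S'(1) aN bND by (auto simp: S_def N'_def)
    have closed: "\<forall>z\<in>S. f z \<in> S"
    proof
      fix z assume "z \<in> S"
      then consider "z = a" | "z = b" | "z = d" | "z = c" | "z \<in> S'" "z \<noteq> c" "z \<noteq> d"
        unfolding S_def by blast
      then show "f z \<in> S"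
      proof cases
        case 1 then show ?thesis using fa S'(2) by (simp add: S_def)
      next
        case 2 then show ?thesis using cS' by (simp add: S_def c_def)
      next
        case 3 then show ?thesis by (simp add: S_def a_def)
      next
        case 4 then show ?thesis using fc by (simp add: S_def)
      next
        case 5 then show ?thesis using S'(3) f'z[of z] by (force simp: S_def)
      qed
    qed
    have abS': "a \<notin> S'" "b \<notin> S'" using S'(1) by (auto simp: N'_def)
    have "S \<inter> D = S' \<inter> D" using False bND by (auto simp: S_def)
    then have cardS: "card (S \<inter> D) = 2" using S'(4) by simp
    have fS': "finite S'" using S'(1) fN' finite_subset by blast
    have decS: "mset_set (S - D) = add_mset a (add_mset b (mset_set (S' - D)))"
    proof -
      have "S - D = insert a (insert b (S' - D))" using False bND by (auto simp: S_def)
      moreover have "a \<notin> insert b (S' - D)" "b \<notin> S' - D" using ba abS' by auto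
      ultimately show ?thesis using fS' by simp
    qed
    have balS: "image_mset fl (image_mset lab (mset_set (S - D))) = image_mset lab (mset_set (S - D))"
    proof -
      have "image_mset fl (image_mset lab (mset_set (S - D))) = image_mset fl (image_mset lab (mset_set (S' - D))) + {#fl (lab a), fl (lab b)#}"
        unfolding decS by simp
      also have "\<dots> = image_mset lab (mset_set (S' - D)) + {#lab a, lab b#}" using S'(5) pairinv by simp
      also have "\<dots> = image_mset lab (mset_set (S - D))" unfolding decS by simp
      finally show ?thesis .
    qed
    have "d \<in> S" using S'(2) by (simp add: S_def)
    then show ?thesis using SN closed cardS balS by blast
  qed
qed




definition sw :: "nat \<Rightarrow> nat \<Rightarrow> nat \<Rightarrow> nat" where
  "sw \<alpha> \<beta> z = (if z = \<alpha> then \<beta> else if z = \<beta> then \<alpha> else z)"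
definition flip :: "nat \<Rightarrow> nat \<Rightarrow> nat set \<Rightarrow> nat set" where
  "flip \<alpha> \<beta> e = sw \<alpha> \<beta> ` e"
definition touch :: "nat \<Rightarrow> nat \<Rightarrow> nat set \<Rightarrow> bool" where
  "touch \<alpha> \<beta> e = ((\<alpha> \<in> e) \<noteq> (\<beta> \<in> e))"

lemma flip_pair[simp]: "flip \<alpha> \<beta> {a, b} = {sw \<alpha> \<beta> a, sw \<alpha> \<beta> b}"
  by (simp add: flip_def)

lemma sw_simps[simp]: "sw \<alpha> \<beta> \<alpha> = \<beta>" "sw \<alpha> \<beta> \<beta> = \<alpha>" "z \<noteq> \<alpha> \<Longrightarrow> z \<noteq> \<beta> \<Longrightarrow> sw \<alpha> \<beta> z = z"
  by (auto simp: sw_def)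

lemma sw_sw[simp]: "sw \<alpha> \<beta> (sw \<alpha> \<beta> z) = z"
  by (auto simp: sw_def)

lemma flip_flip[simp]: "flip \<alpha> \<beta> (flip \<alpha> \<beta> e) = e"
  by (simp add: flip_def image_image)

lemma touch_flip_neq: "touch \<alpha> \<beta> e \<Longrightarrow> flip \<alpha> \<beta> e \<noteq> e"
  by (auto simp: touch_def flip_def sw_def)

lemma touch_flip[simp]: "touch \<alpha> \<beta> (flip \<alpha> \<beta> e) = touch \<alpha> \<beta> e"
  by (auto simp: touch_def flip_def sw_def split: if_splits)

lemma filter_touch_pe_none: "\<alpha> \<notin> set Q \<Longrightarrow> \<beta> \<notin> set Q \<Longrightarrow> filter_mset (touch \<alpha> \<beta>) (pe Q) = {#}"
  by (auto simp: filter_mset_eq_conv touch_def dest!: pe_sub)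

lemma filter_touch_ce_none: "\<alpha> \<notin> set Q \<Longrightarrow> \<beta> \<notin> set Q \<Longrightarrow> filter_mset (touch \<alpha> \<beta>) (cycle_edges Q) = {#}"
  by (auto simp: filter_mset_eq_conv touch_def dest!: cycle_edges_sub)

lemma seg_touch:
  assumes "{u, w} = {\<alpha>, \<beta>}" "\<alpha> \<noteq> \<beta>" "\<alpha> \<notin> set Q" "\<beta> \<notin> set Q"
  shows "filter_mset (touch \<alpha> \<beta>) (pe (u # Q @ [w])) = (if Q = [] then {#} else {#{u, hd Q}, {last Q, w}#})"
proof (cases "Q = []")
  case True
  then show ?thesis using assms by (auto simp: touch_def doubleton_eq_iff)
next
  case False
  have "hd Q \<in> set Q" "last Q \<in> set Q" using False by auto
  then show ?thesis using assms False
    by (auto simp: pe_mid filter_touch_pe_none touch_def doubleton_eq_iff)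
qed

lemma seg_switch:
  assumes "{u, w} = {\<alpha>, \<beta>}" "\<alpha> \<noteq> \<beta>" "\<alpha> \<notin> set Q" "\<beta> \<notin> set Q"
  shows "pe (u # rev Q @ [w]) + (if Q = [] then {#} else {#{u, hd Q}, {last Q, w}#})
       = pe (u # Q @ [w]) + (if Q = [] then {#} else {#flip \<alpha> \<beta> {u, hd Q}, flip \<alpha> \<beta> {last Q, w}#})"
proof (cases "Q = []")
  case True
  then show ?thesis by simp
next
  case False
  have h: "hd Q \<in> set Q" "last Q \<in> set Q" using False by auto
  have sw1: "sw \<alpha> \<beta> (hd Q) = hd Q" "sw \<alpha> \<beta> (last Q) = last Q" using h assms(3,4) by (auto simp: sw_def)
  have swu: "sw \<alpha> \<beta> u = w" "sw \<alpha> \<beta> w = u" using assms by (auto simp: doubleton_eq_iff)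
  have r: "rev Q \<noteq> []" "hd (rev Q) = last Q" "last (rev Q) = hd Q" using False by (auto simp: hd_rev last_rev)
  show ?thesis using False
    by (simp add: pe_mid r pe_rev sw1 swu insert_commute add_mset_commute)
qed

lemma split_beta: "\<beta> \<in> set P \<Longrightarrow> P = takeWhile (\<lambda>z. z \<noteq> \<beta>) P @ \<beta> # tl (dropWhile (\<lambda>z. z \<noteq> \<beta>) P)"
proof -
  assume b: "\<beta> \<in> set P"
  have ne: "dropWhile (\<lambda>z. z \<noteq> \<beta>) P \<noteq> []" using b by (simp add: dropWhile_eq_Nil_conv)
  have "hd (dropWhile (\<lambda>z. z \<noteq> \<beta>) P) = \<beta>" using hd_dropWhile[OF ne] by simp
  then have "dropWhile (\<lambda>z. z \<noteq> \<beta>) P = \<beta> # tl (dropWhile (\<lambda>z. z \<noteq> \<beta>) P)"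
    using ne by (metis list.collapse)
  then show ?thesis by (metis takeWhile_dropWhile_id)
qed

definition tk :: "nat \<Rightarrow> nat list \<Rightarrow> nat list" where "tk \<beta> P = takeWhile (\<lambda>z. z \<noteq> \<beta>) P"
definition dr :: "nat \<Rightarrow> nat list \<Rightarrow> nat list" where "dr \<beta> P = tl (dropWhile (\<lambda>z. z \<noteq> \<beta>) P)"

definition normC :: "nat \<Rightarrow> nat \<Rightarrow> nat list \<Rightarrow> bool" where
  "normC \<alpha> \<beta> c \<longleftrightarrow> c \<noteq> [] \<and> (hd c = \<alpha> \<or> (hd c = \<beta> \<and> \<alpha> \<notin> set c) \<or> (\<alpha> \<notin> set c \<and> \<beta> \<notin> set c))"

definition tagsC :: "nat \<Rightarrow> nat \<Rightarrow> nat list \<Rightarrow> nat set" where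
  "tagsC \<alpha> \<beta> c = (if c \<noteq> [] \<and> hd c = \<alpha> then
      (if \<beta> \<in> set (tl c) then (if tk \<beta> (tl c) = [] then {} else {0,1}) \<union> (if dr \<beta> (tl c) = [] then {} else {2,3})
       else {0,1})
    else if c \<noteq> [] \<and> hd c = \<beta> \<and> \<alpha> \<notin> set c then {0,1} else {})"

definition ceC :: "nat \<Rightarrow> nat \<Rightarrow> nat list \<Rightarrow> nat \<Rightarrow> nat set" where
  "ceC \<alpha> \<beta> c t = (if hd c = \<alpha> \<and> \<beta> \<in> set (tl c) then
      (if t = 0 then {\<alpha>, hd (tk \<beta> (tl c))} else if t = 1 then {last (tk \<beta> (tl c)), \<beta>}
       else if t = 2 then {\<beta>, hd (dr \<beta> (tl c))} else {last (dr \<beta> (tl c)), \<alpha>})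
    else (if t = 0 then {hd c, hd (tl c)} else {last (tl c), hd c}))"

definition swC :: "nat \<Rightarrow> nat \<Rightarrow> nat list \<Rightarrow> bool \<Rightarrow> bool \<Rightarrow> nat list" where
  "swC \<alpha> \<beta> c s1 s2 = (if c \<noteq> [] \<and> hd c = \<alpha> then
      (if \<beta> \<in> set (tl c) then \<alpha> # (if s1 then rev (tk \<beta> (tl c)) else tk \<beta> (tl c)) @ \<beta> # (if s2 then rev (dr \<beta> (tl c)) else dr \<beta> (tl c))
       else (if s1 then \<beta> # tl c else c))
    else if c \<noteq> [] \<and> hd c = \<beta> \<and> \<alpha> \<notin> set c then (if s1 then \<alpha> # tl c else c) else c)"

definition STs :: "bool \<Rightarrow> bool \<Rightarrow> nat set" where
  "STs s1 s2 = (if s1 then {0,1} else {}) \<union> (if s2 then {2,3} else {})"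

lemma tagsC_sub: "tagsC \<alpha> \<beta> c \<subseteq> {0,1,2,3}"
  by (auto simp: tagsC_def)

lemma tagsC_pair: "(0 \<in> tagsC \<alpha> \<beta> c \<longleftrightarrow> 1 \<in> tagsC \<alpha> \<beta> c) \<and> (2 \<in> tagsC \<alpha> \<beta> c \<longleftrightarrow> 3 \<in> tagsC \<alpha> \<beta> c)"
  by (auto simp: tagsC_def)




lemma sum_STs: "(\<Sum>t\<in>STs s1 s2. g t) = (if s1 then g 0 + g 1 else 0) + (if s2 then g 2 + g (3::nat) else 0)"
  by (cases s1; cases s2) (auto simp: STs_def ac_simps)

lemma single_touch:
  assumes "{\<gamma>, \<gamma>'} = {\<alpha>, \<beta>}" "\<alpha> \<noteq> \<beta>" "\<alpha> \<notin> set P" "\<beta> \<notin> set P" "P \<noteq> []"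
  shows "filter_mset (touch \<alpha> \<beta>) (cycle_edges (\<gamma> # P)) = {#{\<gamma>, hd P}, {last P, \<gamma>}#}"
proof -
  have "filter_mset (touch \<alpha> \<beta>) (pe (\<gamma> # P @ [\<gamma>])) = {#{\<gamma>, hd P}, {last P, \<gamma>}#}"
  proof -
    have h: "hd P \<in> set P" "last P \<in> set P" using assms by auto
    then show ?thesis using assms
      by (auto simp: pe_mid filter_touch_pe_none touch_def doubleton_eq_iff)
  qed
  then show ?thesis by (simp add: cycle_edges_Cons)
qed

lemma single_switch:
  assumes "{\<gamma>, \<gamma>'} = {\<alpha>, \<beta>}" "\<alpha> \<noteq> \<beta>" "\<alpha> \<notin> set P" "\<beta> \<notin> set P" "P \<noteq> []"
  shows "cycle_edges (\<gamma>' # P) + {#{\<gamma>, hd P}, {last P, \<gamma>}#} = cycle_edges (\<gamma> # P) + {#flip \<alpha> \<beta> {\<gamma>, hd P}, flip \<alpha> \<beta> {last P, \<gamma>}#}"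
proof -
  have h: "hd P \<in> set P" "last P \<in> set P" using assms by auto
  have sw1: "sw \<alpha> \<beta> (hd P) = hd P" "sw \<alpha> \<beta> (last P) = last P" using h assms(3,4) by (auto simp: sw_def)
  have swu: "sw \<alpha> \<beta> \<gamma> = \<gamma>'" using assms(1,2) by (auto simp: doubleton_eq_iff sw_def)
  show ?thesis using assms(5)
    by (simp add: cycle_edges_Cons pe_mid sw1 swu add_mset_commute)
qed

lemma tk_dr:
  assumes "\<beta> \<in> set P"
  shows "P = tk \<beta> P @ \<beta> # dr \<beta> P"
  using split_beta[OF assms] by (simp add: tk_def dr_def)

lemma cyc_touch:
  assumes c: "is_cycle_list c" "normC \<alpha> \<beta> c" and ab: "\<alpha> \<noteq> \<beta>"
  shows "filter_mset (touch \<alpha> \<beta>) (cycle_edges c) = (\<Sum>t\<in>tagsC \<alpha> \<beta> c. {#ceC \<alpha> \<beta> c t#})"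
proof -
  have dc: "distinct c" and lc: "length c \<ge> 2" and ne: "c \<noteq> []" using c by (auto simp: is_cycle_list_def normC_def)
  obtain a P where cP: "c = a # P" using ne by (cases c) auto
  have Pne: "P \<noteq> []" using lc cP by auto
  have aP: "a \<notin> set P" "distinct P" using dc cP by auto
  consider "a = \<alpha>" "\<beta> \<in> set P" | "a = \<alpha>" "\<beta> \<notin> set P" | "a = \<beta>" "\<alpha> \<notin> set c" | "\<alpha> \<notin> set c" "\<beta> \<notin> set c" "a \<noteq> \<alpha>" "a \<noteq> \<beta>"
    using c(2) cP by (auto simp: normC_def)
  then show ?thesis
  proof cases
    case 1
    define P1 where "P1 = tk \<beta> P"
    define P2 where "P2 = dr \<beta> P"
    have Psplit: "P = P1 @ \<beta> # P2" using tk_dr[OF 1(2)] by (simp add: P1_def P2_def)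
    have nin: "\<alpha> \<notin> set P1" "\<beta> \<notin> set P1" "\<alpha> \<notin> set P2" "\<beta> \<notin> set P2"
      using aP 1 Psplit by auto
    have ce: "cycle_edges c = pe (\<alpha> # P1 @ [\<beta>]) + pe (\<beta> # P2 @ [\<alpha>])"
      using pe_append[of "\<alpha> # P1" \<beta> "P2 @ [\<alpha>]"] by (simp add: cycle_edges_Cons cP 1 Psplit)
    have t1: "filter_mset (touch \<alpha> \<beta>) (pe (\<alpha> # P1 @ [\<beta>])) = (if P1 = [] then {#} else {#{\<alpha>, hd P1}, {last P1, \<beta>}#})"
      by (rule seg_touch) (use nin ab in auto)
    have t2: "filter_mset (touch \<alpha> \<beta>) (pe (\<beta> # P2 @ [\<alpha>])) = (if P2 = [] then {#} else {#{\<beta>, hd P2}, {last P2, \<alpha>}#})"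
      by (rule seg_touch) (use nin ab in auto)
    have tg: "tagsC \<alpha> \<beta> c = (if P1 = [] then {} else {0,1}) \<union> (if P2 = [] then {} else {2,3})"
      using 1 by (simp add: tagsC_def cP P1_def P2_def)
    have ceq: "ceC \<alpha> \<beta> c t = (if t = 0 then {\<alpha>, hd P1} else if t = 1 then {last P1, \<beta>}
       else if t = 2 then {\<beta>, hd P2} else {last P2, \<alpha>})" for t
      using 1 by (simp add: ceC_def cP P1_def P2_def)
    show ?thesis unfolding ce filter_union_mset t1 t2 tg
      by (cases "P1 = []"; cases "P2 = []") (simp_all add: ceq)
  next
    case 2
    have tg: "tagsC \<alpha> \<beta> c = {0,1}" using 2 by (simp add: tagsC_def cP)
    have ceq: "ceC \<alpha> \<beta> c t = (if t = 0 then {\<alpha>, hd P} else {last P, \<alpha>})" for t using 2 by (simp add: ceC_def cP)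
    have "filter_mset (touch \<alpha> \<beta>) (cycle_edges c) = {#{\<alpha>, hd P}, {last P, \<alpha>}#}"
      using single_touch[of \<alpha> \<beta> \<alpha> \<beta> P] 2 aP ab Pne cP by simp
    then show ?thesis unfolding tg by (simp add: ceq)
  next
    case 3
    have tg: "tagsC \<alpha> \<beta> c = {0,1}" using 3 ab by (simp add: tagsC_def cP)
    have ceq: "ceC \<alpha> \<beta> c t = (if t = 0 then {\<beta>, hd P} else {last P, \<beta>})" for t using 3 ab by (simp add: ceC_def cP)
    have "filter_mset (touch \<alpha> \<beta>) (cycle_edges c) = {#{\<beta>, hd P}, {last P, \<beta>}#}"
      using single_touch[of \<beta> \<alpha> \<alpha> \<beta> P] 3 aP ab Pne cP by (simp add: insert_commute)
    then show ?thesis unfolding tg by (simp add: ceq)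
  next
    case 4
    have tg: "tagsC \<alpha> \<beta> c = {}" using 4 by (simp add: tagsC_def cP)
    show ?thesis unfolding tg using filter_touch_ce_none[OF 4(1,2)] by simp
  qed
qed

lemma cyc_switch:
  assumes c: "is_cycle_list c" "normC \<alpha> \<beta> c" and ab: "\<alpha> \<noteq> \<beta>"
    and s1: "s1 \<Longrightarrow> 0 \<in> tagsC \<alpha> \<beta> c" and s2: "s2 \<Longrightarrow> 2 \<in> tagsC \<alpha> \<beta> c"
  shows "cycle_edges (swC \<alpha> \<beta> c s1 s2) + (\<Sum>t\<in>STs s1 s2. {#ceC \<alpha> \<beta> c t#})
       = cycle_edges c + (\<Sum>t\<in>STs s1 s2. {#flip \<alpha> \<beta> (ceC \<alpha> \<beta> c t)#})
     \<and> is_cycle_list (swC \<alpha> \<beta> c s1 s2) \<and> length (swC \<alpha> \<beta> c s1 s2) = length c"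
proof -
  have dc: "distinct c" and lc: "length c \<ge> 2" and ne: "c \<noteq> []" using c by (auto simp: is_cycle_list_def normC_def)
  obtain a P where cP: "c = a # P" using ne by (cases c) auto
  have Pne: "P \<noteq> []" using lc cP by auto
  have aP: "a \<notin> set P" "distinct P" using dc cP by auto
  consider "a = \<alpha>" "\<beta> \<in> set P" | "a = \<alpha>" "\<beta> \<notin> set P" | "a = \<beta>" "\<alpha> \<notin> set c" | "\<alpha> \<notin> set c" "\<beta> \<notin> set c" "a \<noteq> \<alpha>" "a \<noteq> \<beta>"
    using c(2) cP by (auto simp: normC_def)
  then show ?thesis
  proof cases
    case 1
    define P1 where "P1 = tk \<beta> P"
    define P2 where "P2 = dr \<beta> P"
    have Psplit: "P = P1 @ \<beta> # P2" using tk_dr[OF 1(2)] by (simp add: P1_def P2_def)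
    have nin: "\<alpha> \<notin> set P1" "\<beta> \<notin> set P1" "\<alpha> \<notin> set P2" "\<beta> \<notin> set P2"
      using aP 1 Psplit by auto
    have dP: "distinct P1" "distinct P2" "set P1 \<inter> set P2 = {}" using aP Psplit by auto
    have ce: "cycle_edges c = pe (\<alpha> # P1 @ [\<beta>]) + pe (\<beta> # P2 @ [\<alpha>])"
      using pe_append[of "\<alpha> # P1" \<beta> "P2 @ [\<alpha>]"] by (simp add: cycle_edges_Cons cP 1 Psplit)
    define Q1 where "Q1 = (if s1 then rev P1 else P1)"
    define Q2 where "Q2 = (if s2 then rev P2 else P2)"
    have swc: "swC \<alpha> \<beta> c s1 s2 = \<alpha> # Q1 @ \<beta> # Q2" using 1 by (simp add: swC_def cP P1_def P2_def Q1_def Q2_def)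
    have ce': "cycle_edges (\<alpha> # Q1 @ \<beta> # Q2) = pe (\<alpha> # Q1 @ [\<beta>]) + pe (\<beta> # Q2 @ [\<alpha>])"
      using pe_append[of "\<alpha> # Q1" \<beta> "Q2 @ [\<alpha>]"] by (simp add: cycle_edges_Cons)
    have tg: "tagsC \<alpha> \<beta> c = (if P1 = [] then {} else {0,1}) \<union> (if P2 = [] then {} else {2,3})"
      using 1 by (simp add: tagsC_def cP P1_def P2_def)
    have ceq: "ceC \<alpha> \<beta> c t = (if t = 0 then {\<alpha>, hd P1} else if t = 1 then {last P1, \<beta>}
       else if t = 2 then {\<beta>, hd P2} else {last P2, \<alpha>})" for t
      using 1 by (simp add: ceC_def cP P1_def P2_def)
    have p1: "s1 \<Longrightarrow> P1 \<noteq> []" using s1 tg by (auto split: if_splits)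
    have p2: "s2 \<Longrightarrow> P2 \<noteq> []" using s2 tg by (auto split: if_splits)
    have e1: "pe (\<alpha> # Q1 @ [\<beta>]) + (if s1 then {#{\<alpha>, hd P1}, {last P1, \<beta>}#} else {#})
       = pe (\<alpha> # P1 @ [\<beta>]) + (if s1 then {#flip \<alpha> \<beta> {\<alpha>, hd P1}, flip \<alpha> \<beta> {last P1, \<beta>}#} else {#})"
    proof (cases s1)
      case True
      have "{\<alpha>, \<beta>} = {\<alpha>, \<beta>}" by simp
      from seg_switch[OF this ab nin(1,2)] True p1 show ?thesis by (simp add: Q1_def)
    qed (simp add: Q1_def)
    have e2: "pe (\<beta> # Q2 @ [\<alpha>]) + (if s2 then {#{\<beta>, hd P2}, {last P2, \<alpha>}#} else {#})
       = pe (\<beta> # P2 @ [\<alpha>]) + (if s2 then {#flip \<alpha> \<beta> {\<beta>, hd P2}, flip \<alpha> \<beta> {last P2, \<alpha>}#} else {#})"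
    proof (cases s2)
      case True
      have "{\<beta>, \<alpha>} = {\<alpha>, \<beta>}" by auto
      from seg_switch[OF this ab nin(3,4)] True p2 show ?thesis by (simp add: Q2_def)
    qed (simp add: Q2_def)
    have main: "cycle_edges (swC \<alpha> \<beta> c s1 s2) + (\<Sum>t\<in>STs s1 s2. {#ceC \<alpha> \<beta> c t#})
       = cycle_edges c + (\<Sum>t\<in>STs s1 s2. {#flip \<alpha> \<beta> (ceC \<alpha> \<beta> c t)#})"
    proof -
      have "cycle_edges (swC \<alpha> \<beta> c s1 s2) + (\<Sum>t\<in>STs s1 s2. {#ceC \<alpha> \<beta> c t#})
        = (pe (\<alpha> # Q1 @ [\<beta>]) + (if s1 then {#{\<alpha>, hd P1}, {last P1, \<beta>}#} else {#}))
          + (pe (\<beta> # Q2 @ [\<alpha>]) + (if s2 then {#{\<beta>, hd P2}, {last P2, \<alpha>}#} else {#}))"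
        unfolding swc ce' sum_STs by (simp add: ceq)
      also have "\<dots> = (pe (\<alpha> # P1 @ [\<beta>]) + (if s1 then {#flip \<alpha> \<beta> {\<alpha>, hd P1}, flip \<alpha> \<beta> {last P1, \<beta>}#} else {#}))
          + (pe (\<beta> # P2 @ [\<alpha>]) + (if s2 then {#flip \<alpha> \<beta> {\<beta>, hd P2}, flip \<alpha> \<beta> {last P2, \<alpha>}#} else {#}))"
        using e1 e2 by simp
      also have "\<dots> = cycle_edges c + (\<Sum>t\<in>STs s1 s2. {#flip \<alpha> \<beta> (ceC \<alpha> \<beta> c t)#})"
        unfolding ce sum_STs by (simp add: ceq)
      finally show ?thesis .
    qed
    have "distinct (\<alpha> # Q1 @ \<beta> # Q2)" using dP nin ab by (auto simp: Q1_def Q2_def)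
    moreover have "length (\<alpha> # Q1 @ \<beta> # Q2) = length c" by (simp add: Q1_def Q2_def cP Psplit)
    ultimately show ?thesis using main lc by (simp add: swc is_cycle_list_def)
  next
    case 2
    have tg: "tagsC \<alpha> \<beta> c = {0,1}" using 2 by (simp add: tagsC_def cP)
    have ceq: "ceC \<alpha> \<beta> c t = (if t = 0 then {\<alpha>, hd P} else {last P, \<alpha>})" for t using 2 by (simp add: ceC_def cP)
    have ns2: "\<not> s2" using s2 tg by auto
    show ?thesis
    proof (cases s1)
      case True
      have swc: "swC \<alpha> \<beta> c s1 s2 = \<beta> # P" using 2 True by (simp add: swC_def cP)
      have "cycle_edges (\<beta> # P) + {#{\<alpha>, hd P}, {last P, \<alpha>}#} = cycle_edges (\<alpha> # P) + {#flip \<alpha> \<beta> {\<alpha>, hd P}, flip \<alpha> \<beta> {last P, \<alpha>}#}"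
        by (rule single_switch) (use 2 aP ab Pne in auto)
      then have E: "cycle_edges (\<beta> # P) + {#{\<alpha>, hd P}, {last P, \<alpha>}#} = cycle_edges c + {#flip \<alpha> \<beta> {\<alpha>, hd P}, flip \<alpha> \<beta> {last P, \<alpha>}#}"
        using cP 2 by simp
      have "distinct (\<beta> # P)" using 2 aP by auto
      moreover have "length (\<beta> # P) = length c" using cP by simp
      ultimately show ?thesis using True ns2 lc E unfolding swc sum_STs by (simp add: ceq is_cycle_list_def add_mset_commute)
    next
      case False
      have "swC \<alpha> \<beta> c s1 s2 = c" using 2 False by (simp add: swC_def cP)
      then show ?thesis using ns2 False c by (simp add: STs_def)
    qed
  next
    case 3
    have tg: "tagsC \<alpha> \<beta> c = {0,1}" using 3 ab by (simp add: tagsC_def cP)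
    have ceq: "ceC \<alpha> \<beta> c t = (if t = 0 then {\<beta>, hd P} else {last P, \<beta>})" for t using 3 ab by (simp add: ceC_def cP)
    have ns2: "\<not> s2" using s2 tg by auto
    show ?thesis
    proof (cases s1)
      case True
      have swc: "swC \<alpha> \<beta> c s1 s2 = \<alpha> # P" using 3 True ab by (simp add: swC_def cP)
      have "cycle_edges (\<alpha> # P) + {#{\<beta>, hd P}, {last P, \<beta>}#} = cycle_edges (\<beta> # P) + {#flip \<alpha> \<beta> {\<beta>, hd P}, flip \<alpha> \<beta> {last P, \<beta>}#}"
        by (rule single_switch) (use 3 aP ab Pne cP in auto)
      then have E: "cycle_edges (\<alpha> # P) + {#{\<beta>, hd P}, {last P, \<beta>}#} = cycle_edges c + {#flip \<alpha> \<beta> {\<beta>, hd P}, flip \<alpha> \<beta> {last P, \<beta>}#}"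
        using cP 3 by simp
      have "distinct (\<alpha> # P)" using 3 aP cP by auto
      moreover have "length (\<alpha> # P) = length c" using cP by simp
      ultimately show ?thesis using True ns2 lc E unfolding swc sum_STs by (simp add: ceq is_cycle_list_def add_mset_commute)
    next
      case False
      have "swC \<alpha> \<beta> c s1 s2 = c" using 3 False ab by (simp add: swC_def cP)
      then show ?thesis using ns2 False c by (simp add: STs_def)
    qed
  next
    case 4
    have tg: "tagsC \<alpha> \<beta> c = {}" using 4 by (simp add: tagsC_def cP)
    have "\<not> s1" "\<not> s2" using s1 s2 tg by auto
    moreover have "swC \<alpha> \<beta> c s1 s2 = c" using 4 by (simp add: swC_def cP)
    ultimately show ?thesis using c by (simp add: STs_def)
  qed
qed




lemma norm_cycle:
  assumes "is_cycle_list c"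
  shows "\<exists>c'. is_cycle_list c' \<and> length c' = length c \<and> cycle_edges c' = cycle_edges c \<and> normC \<alpha> \<beta> c' \<and> set c' = set c"
proof -
  have rot: "\<exists>c'. is_cycle_list c' \<and> length c' = length c \<and> cycle_edges c' = cycle_edges c \<and> hd c' = \<gamma> \<and> c' \<noteq> [] \<and> set c' = set c"
    if g: "\<gamma> \<in> set c" for \<gamma>
  proof -
    obtain xs ys where c: "c = xs @ \<gamma> # ys" using split_list[OF g] by blast
    have "is_cycle_list (\<gamma> # ys @ xs)" using assms c by (auto simp: is_cycle_list_def)
    moreover have "cycle_edges (\<gamma> # ys @ xs) = cycle_edges c" using c cycle_edges_rot_decomp by simp
    ultimately show ?thesis using c by (intro exI[of _ "\<gamma> # ys @ xs"]) auto
  qed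
  show ?thesis
  proof (cases "\<alpha> \<in> set c")
    case True
    then show ?thesis using rot[OF True] by (auto simp: normC_def)
  next
    case False
    show ?thesis
    proof (cases "\<beta> \<in> set c")
      case True
      then show ?thesis using rot[OF True] False by (auto simp: normC_def)
    next
      case False2: False
      have "c \<noteq> []" using assms by (auto simp: is_cycle_list_def)
      then show ?thesis using assms False False2 by (intro exI[of _ c]) (auto simp: normC_def)
    qed
  qed
qed

lemma norm_list:
  assumes "\<forall>c\<in>set Cs. is_cycle_list c"
  shows "\<exists>Cs'. (\<forall>c\<in>set Cs'. is_cycle_list c \<and> normC \<alpha> \<beta> c) \<and> map length Cs' = map length Cs
     \<and> sum_list (map cycle_edges Cs') = sum_list (map cycle_edges Cs)"
  using assms
proof (induction Cs)
  case Nil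
  then show ?case by simp
next
  case (Cons c Cs)
  obtain Cs' where Cs': "\<forall>c\<in>set Cs'. is_cycle_list c \<and> normC \<alpha> \<beta> c" "map length Cs' = map length Cs"
     "sum_list (map cycle_edges Cs') = sum_list (map cycle_edges Cs)" using Cons by auto
  obtain c' where c': "is_cycle_list c'" "length c' = length c" "cycle_edges c' = cycle_edges c" "normC \<alpha> \<beta> c'"
    using norm_cycle[of c \<alpha> \<beta>] Cons.prems by auto
  show ?case using Cs' c' by (intro exI[of _ "c' # Cs'"]) auto
qed

lemma image_mset_sum: "finite A \<Longrightarrow> image_mset g (mset_set A) = (\<Sum>a\<in>A. {#g a#})"
  by (induction A rule: finite_induct) auto

lemma filter_sum: "filter_mset P (\<Sum>a\<in>A. F a) = (\<Sum>a\<in>A. filter_mset P (F a))"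
  by (induction A rule: infinite_finite_induct) auto

lemma four_sum:
  fixes a b c d e f g h :: "'a :: comm_monoid_add"
  assumes "a + c = e + g" "b + d = f + h"
  shows "a + b + (c + d) = e + f + (g + h)"
proof -
  have "a + b + (c + d) = (a + c) + (b + d)" by (simp add: ac_simps)
  also have "\<dots> = (e + g) + (f + h)" using assms by simp
  also have "\<dots> = e + f + (g + h)" by (simp add: ac_simps)
  finally show ?thesis .
qed

lemma core:
  fixes \<alpha> \<beta> :: nat and d0 :: "nat set" and Cs :: "nat list list" and I Isw G Dd :: "nat set multiset"
    and me :: "nat \<Rightarrow> nat set" and MT :: "nat set"
  assumes ab: "\<alpha> \<noteq> \<beta>"
    and cyc: "\<forall>c\<in>set Cs. is_cycle_list c \<and> normC \<alpha> \<beta> c"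
    and MT: "MT = {} \<or> MT = {0,1}"
    and mtouch: "filter_mset (touch \<alpha> \<beta>) I = (\<Sum>t\<in>MT. {#me t#})"
    and msw: "MT = {0,1} \<Longrightarrow> Isw + {#me 0, me 1#} = I + {#flip \<alpha> \<beta> (me 0), flip \<alpha> \<beta> (me 1)#}"
    and G: "G = sum_list (map cycle_edges Cs) + I"
    and bal: "filter_mset (touch \<alpha> \<beta>) G + image_mset (flip \<alpha> \<beta>) Dd = image_mset (flip \<alpha> \<beta>) (filter_mset (touch \<alpha> \<beta>) G) + Dd"
    and sub: "Dd \<subseteq># filter_mset (touch \<alpha> \<beta>) G"
    and d0: "d0 \<in># Dd"
  shows "\<exists>Cs' I' Xd. Xd \<subseteq># Dd \<and> size Xd = 2 \<and> d0 \<in># Xd \<and> (\<forall>c\<in>set Cs'. is_cycle_list c)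
     \<and> map length Cs' = map length Cs \<and> (I' = I \<or> (I' = Isw \<and> MT = {0,1}))
     \<and> sum_list (map cycle_edges Cs') + I' + Xd = G + image_mset (flip \<alpha> \<beta>) Xd"
proof -
  define K where "K = length Cs"
  define N where "N = (SIGMA i:{..<K}. tagsC \<alpha> \<beta> (Cs ! i)) \<union> ({K} \<times> MT)"
  define edge where "edge = (\<lambda>(i, t). if i < K then ceC \<alpha> \<beta> (Cs ! i) t else me t)"
  define f :: "nat \<times> nat \<Rightarrow> nat \<times> nat" where "f = (\<lambda>(i, t). (i, if even t then t + 1 else t - 1))"
  define fl where "fl = flip \<alpha> \<beta>"
  define Q where "Q = filter_mset (touch \<alpha> \<beta>) G"
  have Nsub: "N \<subseteq> {..K} \<times> {0,1,2,3}" using tagsC_sub MT by (auto simp: N_def)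
  have fN: "finite N" by (rule finite_subset[OF Nsub]) auto
  have finv: "\<forall>a\<in>N. f a \<in> N \<and> f (f a) = a \<and> f a \<noteq> a"
  proof
    fix a assume aN: "a \<in> N"
    obtain i t where a: "a = (i, t)" by (cases a)
    have t4: "t \<in> {0,1,2,3}" using aN Nsub a by auto
    have mem: "(i, t') \<in> N" if "t' \<in> {0,1,2,3}" "t' div 2 = t div 2" for t'
    proof (cases "i < K")
      case True
      then have "t \<in> tagsC \<alpha> \<beta> (Cs ! i)" using aN a by (auto simp: N_def)
      then show ?thesis using tagsC_pair[of \<alpha> \<beta> "Cs ! i"] True that t4 by (auto simp: N_def)
    next
      case False
      then have "i = K" "t \<in> MT" using aN a by (auto simp: N_def)
      then show ?thesis using MT that t4 by (auto simp: N_def)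
    qed
    define t' where "t' = (if even t then t + 1 else t - 1)"
    have fa: "f a = (i, t')" by (simp add: f_def a t'_def)
    have t'4: "t' \<in> {0,1,2,3}" "t' div 2 = t div 2" using t4 by (auto simp: t'_def)
    have ffa: "f (i, t') = (i, t)" using t4 by (auto simp: f_def t'_def)
    have "t' \<noteq> t" using t4 by (auto simp: t'_def)
    then show "f a \<in> N \<and> f (f a) = a \<and> f a \<noteq> a" using mem[OF t'4] fa ffa a by simp
  qed
  have touchN: "touch \<alpha> \<beta> (edge a)" if "a \<in> N" for a
  proof -
    obtain i t where a: "a = (i, t)" by (cases a)
    show ?thesis
    proof (cases "i < K")
      case True
      then have t: "t \<in> tagsC \<alpha> \<beta> (Cs ! i)" and ci: "Cs ! i \<in> set Cs" using that a by (auto simp: N_def K_def)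
      have ft: "finite (tagsC \<alpha> \<beta> (Cs ! i))" using finite_subset[OF tagsC_sub] by auto
      have "ceC \<alpha> \<beta> (Cs ! i) t \<in># image_mset (ceC \<alpha> \<beta> (Cs ! i)) (mset_set (tagsC \<alpha> \<beta> (Cs ! i)))"
        using t ft by simp
      then have "ceC \<alpha> \<beta> (Cs ! i) t \<in># filter_mset (touch \<alpha> \<beta>) (cycle_edges (Cs ! i))"
        using cyc_touch[of "Cs ! i" \<alpha> \<beta>] cyc ci ab by (simp add: image_mset_sum[OF ft])
      then show ?thesis using True a by (simp add: edge_def)
    next
      case False
      then have "t \<in> MT" using that a by (auto simp: N_def)
      then have "me t \<in># filter_mset (touch \<alpha> \<beta>) I" using mtouch MT by auto
      then show ?thesis using False a by (simp add: edge_def)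
    qed
  qed
  have labf: "\<forall>a\<in>N. fl (edge a) \<noteq> edge a" using touchN touch_flip_neq by (auto simp: fl_def)
  have flf: "\<forall>l. fl (fl l) = l" by (simp add: fl_def)
  have imN: "image_mset edge (mset_set N) = Q"
  proof -
    have dj: "(SIGMA i:{..<K}. tagsC \<alpha> \<beta> (Cs ! i)) \<inter> ({K} \<times> MT) = {}" by auto
    have fin1: "finite (SIGMA i:{..<K}. tagsC \<alpha> \<beta> (Cs ! i))"
      using finite_subset[OF tagsC_sub] by auto
    have fin2: "finite ({K} \<times> MT)" using MT by auto
    have "image_mset edge (mset_set N) = (\<Sum>a\<in>N. {#edge a#})" using fN by (rule image_mset_sum)
    also have "\<dots> = (\<Sum>a\<in>(SIGMA i:{..<K}. tagsC \<alpha> \<beta> (Cs ! i)). {#edge a#}) + (\<Sum>a\<in>{K} \<times> MT. {#edge a#})"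
      unfolding N_def by (rule sum.union_disjoint[OF fin1 fin2 dj])
    also have "(\<Sum>a\<in>(SIGMA i:{..<K}. tagsC \<alpha> \<beta> (Cs ! i)). {#edge a#}) = (\<Sum>i<K. \<Sum>t\<in>tagsC \<alpha> \<beta> (Cs ! i). {#ceC \<alpha> \<beta> (Cs ! i) t#})"
    proof -
      have ft: "\<forall>i\<in>{..<K}. finite (tagsC \<alpha> \<beta> (Cs ! i))" using finite_subset[OF tagsC_sub] by auto
      have "(\<Sum>i<K. \<Sum>t\<in>tagsC \<alpha> \<beta> (Cs ! i). {#edge (i, t)#}) = (\<Sum>(i,t)\<in>(SIGMA i:{..<K}. tagsC \<alpha> \<beta> (Cs ! i)). {#edge (i, t)#})"
        by (rule sum.Sigma) (use ft in auto)
      moreover have "(\<Sum>i<K. \<Sum>t\<in>tagsC \<alpha> \<beta> (Cs ! i). {#edge (i, t)#}) = (\<Sum>i<K. \<Sum>t\<in>tagsC \<alpha> \<beta> (Cs ! i). {#ceC \<alpha> \<beta> (Cs ! i) t#})"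
        by (intro sum.cong) (auto simp: edge_def)
      ultimately show ?thesis by (simp add: case_prod_eta)
    qed
    also have "\<dots> = (\<Sum>i<K. filter_mset (touch \<alpha> \<beta>) (cycle_edges (Cs ! i)))"
      using cyc_touch cyc ab by (intro sum.cong) (auto simp: K_def)
    also have "(\<Sum>a\<in>{K} \<times> MT. {#edge a#}) = (\<Sum>t\<in>MT. {#me t#})"
    proof -
      have e: "{K} \<times> MT = Pair K ` MT" by auto
      have "(\<Sum>a\<in>Pair K ` MT. {#edge a#}) = (\<Sum>t\<in>MT. {#edge (K, t)#})"
        by (subst sum.reindex) (auto simp: inj_on_def)
      then show ?thesis unfolding e by (simp add: edge_def)
    qed
    also have "\<dots> = filter_mset (touch \<alpha> \<beta>) I" using mtouch by simp
    finally show ?thesis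
      by (simp add: Q_def G K_def sum_list_sum_nth[of "map cycle_edges Cs"] filter_sum atLeast0LessThan)
  qed
  have subN: "Dd \<subseteq># image_mset edge (mset_set N)" using sub imN by (simp add: Q_def)
  obtain D where DN: "D \<subseteq> N" and imD: "image_mset edge (mset_set D) = Dd"
    using sub_image_mset_set[OF fN subN] by blast
  have fD: "finite D" using DN fN finite_subset by blast
  obtain d where dD: "d \<in> D" and ed: "edge d = d0" using d0 imD[symmetric] fD by auto
  have balND: "image_mset fl (image_mset edge (mset_set (N - D))) = image_mset edge (mset_set (N - D))"
  proof -
    have mD: "mset_set D \<subseteq># mset_set N" using DN fN by (rule subset_imp_msubset_mset_set)
    have e1: "image_mset edge (mset_set (N - D)) = Q - Dd"
      unfolding mset_set_Diff[OF fN DN] image_mset_Diff[OF mD] imN imD by (rule refl)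
    have subQ: "Dd \<subseteq># Q" using sub by (simp add: Q_def)
    have balQ: "Q + image_mset fl Dd = image_mset fl Q + Dd" using bal by (simp add: Q_def fl_def)
    have "image_mset fl (Q - Dd) = image_mset fl Q - image_mset fl Dd"
      using subQ by (rule image_mset_Diff)
    also have "\<dots> = Q - Dd"
    proof (rule multiset_eqI)
      fix e
      have c1: "count Q e + count (image_mset fl Dd) e = count (image_mset fl Q) e + count Dd e"
        using balQ by (metis count_union)
      have c2: "count Dd e \<le> count Q e" using subQ by (simp add: subseteq_mset_def)
      have c3: "count (image_mset fl Dd) e \<le> count (image_mset fl Q) e"
        using image_mset_subseteq_mono[OF subQ, of fl] by (simp add: subseteq_mset_def)
      show "count (image_mset fl Q - image_mset fl Dd) e = count (Q - Dd) e"
        using c1 c2 c3 by simp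
    qed
    finally show ?thesis using e1 by simp
  qed
  obtain S where SN: "S \<subseteq> N" and dS: "d \<in> S" and Sclosed: "\<forall>a\<in>S. f a \<in> S" and cardS: "card (S \<inter> D) = 2"
    and balS: "image_mset fl (image_mset edge (mset_set (S - D))) = image_mset edge (mset_set (S - D))"
    using path_lemma[OF fN DN dD finv labf flf balND] by blast
  have fS: "finite S" using SN fN finite_subset by blast
  define s1 where "s1 = (\<lambda>i. (i, 0::nat) \<in> S)"
  define s2 where "s2 = (\<lambda>i. (i, 2::nat) \<in> S)"
  define Cs' where "Cs' = map (\<lambda>i. swC \<alpha> \<beta> (Cs ! i) (s1 i) (s2 i)) [0..<K]"
  define I' where "I' = (if (K, 0) \<in> S then Isw else I)"
  define Xd where "Xd = image_mset edge (mset_set (S \<inter> D))"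
  have sw_i: "cycle_edges (swC \<alpha> \<beta> (Cs ! i) (s1 i) (s2 i)) + (\<Sum>t\<in>STs (s1 i) (s2 i). {#ceC \<alpha> \<beta> (Cs ! i) t#})
       = cycle_edges (Cs ! i) + (\<Sum>t\<in>STs (s1 i) (s2 i). {#flip \<alpha> \<beta> (ceC \<alpha> \<beta> (Cs ! i) t)#})
     \<and> is_cycle_list (swC \<alpha> \<beta> (Cs ! i) (s1 i) (s2 i)) \<and> length (swC \<alpha> \<beta> (Cs ! i) (s1 i) (s2 i)) = length (Cs ! i)"
    if i: "i < K" for i
  proof (rule cyc_switch)
    show "is_cycle_list (Cs ! i)" "normC \<alpha> \<beta> (Cs ! i)" using cyc i by (auto simp: K_def)
    show "\<alpha> \<noteq> \<beta>" by (rule ab)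
    show "0 \<in> tagsC \<alpha> \<beta> (Cs ! i)" if "s1 i" using that SN i by (auto simp: s1_def N_def)
    show "2 \<in> tagsC \<alpha> \<beta> (Cs ! i)" if "s2 i" using that SN i by (auto simp: s2_def N_def)
  qed
  have lenCs': "length Cs' = K" by (simp add: Cs'_def)
  have mapl: "map length Cs' = map length Cs"
    by (rule nth_equalityI) (auto simp: Cs'_def K_def sw_i)
  have cycs': "\<forall>c\<in>set Cs'. is_cycle_list c" using sw_i by (auto simp: Cs'_def)
  have I'opt: "I' = I \<or> (I' = Isw \<and> MT = {0,1})"
  proof (cases "(K, 0) \<in> S")
    case True
    then have "(K, 0) \<in> N" using SN by auto
    then have "0 \<in> MT" by (auto simp: N_def)
    then show ?thesis using MT True by (auto simp: I'_def)
  qed (simp add: I'_def)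
  have fib: "{a \<in> S. fst a = i} = Pair i ` STs (s1 i) (s2 i)" if "i \<le> K" for i
  proof -
    have "(i, t) \<in> S \<longleftrightarrow> t \<in> STs (s1 i) (s2 i)" for t
    proof
      assume it: "(i, t) \<in> S"
      then have "t \<in> {0,1,2,3}" using SN Nsub by auto
      moreover have "f (i, t) \<in> S" using Sclosed it by auto
      ultimately show "t \<in> STs (s1 i) (s2 i)" using it by (auto simp: STs_def s1_def s2_def f_def)
    next
      assume "t \<in> STs (s1 i) (s2 i)"
      then consider "t = 0" "(i,0) \<in> S" | "t = 1" "(i,0) \<in> S" | "t = 2" "(i,2) \<in> S" | "t = 3" "(i,2) \<in> S"
        by (auto simp: STs_def s1_def s2_def split: if_splits)
      then show "(i, t) \<in> S"
      proof cases
        case 2 then show ?thesis using Sclosed[rule_format, of "(i,0)"] by (simp add: f_def)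
      next
        case 4 then show ?thesis using Sclosed[rule_format, of "(i,2)"] by (simp add: f_def)
      qed auto
    qed
    then show ?thesis by force
  qed
  have sumS: "(\<Sum>a\<in>S. h a) = (\<Sum>i\<le>K. \<Sum>t\<in>STs (s1 i) (s2 i). h (i, t))" for h :: "nat \<times> nat \<Rightarrow> nat set multiset"
  proof -
    have "(\<Sum>a\<in>S. h a) = (\<Sum>i\<le>K. \<Sum>a\<in>{a \<in> S. fst a = i}. h a)"
      using SN Nsub fS by (intro sum.group[symmetric]) auto
    also have "\<dots> = (\<Sum>i\<le>K. \<Sum>t\<in>STs (s1 i) (s2 i). h (i, t))"
    proof (rule sum.cong[OF refl])
      fix i assume "i \<in> {..K}"
      then have "{a \<in> S. fst a = i} = Pair i ` STs (s1 i) (s2 i)" using fib by auto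
      then show "(\<Sum>a\<in>{a \<in> S. fst a = i}. h a) = (\<Sum>t\<in>STs (s1 i) (s2 i). h (i, t))"
        by (simp add: sum.reindex inj_on_def)
    qed
    finally show ?thesis .
  qed
  have sK: "\<not> s2 K"
  proof
    assume "s2 K"
    then have "(K, 2) \<in> N" using SN by (auto simp: s2_def)
    then have "(2::nat) \<in> MT" by (auto simp: N_def)
    then show False using MT by auto
  qed
  have sK1: "s1 K \<Longrightarrow> MT = {0,1}" using SN MT by (auto simp: s1_def N_def)
  have blockK: "I' + (\<Sum>t\<in>STs (s1 K) (s2 K). {#me t#}) = I + (\<Sum>t\<in>STs (s1 K) (s2 K). {#fl (me t)#})"
  proof (cases "s1 K")
    case True
    then show ?thesis using msw[OF sK1[OF True]] sK by (simp add: I'_def s1_def sum_STs fl_def add_mset_commute)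
  next
    case False
    then show ?thesis using sK by (simp add: I'_def s1_def STs_def)
  qed
  have mainX: "sum_list (map cycle_edges Cs') + I' + image_mset edge (mset_set S) = G + image_mset (fl \<circ> edge) (mset_set S)"
  proof -
    have sl: "sum_list (map cycle_edges Cs') = (\<Sum>i<K. cycle_edges (swC \<alpha> \<beta> (Cs ! i) (s1 i) (s2 i)))"
      by (simp add: Cs'_def sum_list_sum_nth lessThan_atLeast0)
    have sl0: "sum_list (map cycle_edges Cs) = (\<Sum>i<K. cycle_edges (Cs ! i))"
      by (simp add: K_def sum_list_sum_nth lessThan_atLeast0)
    have X: "image_mset edge (mset_set S) = (\<Sum>i<K. \<Sum>t\<in>STs (s1 i) (s2 i). {#ceC \<alpha> \<beta> (Cs ! i) t#}) + (\<Sum>t\<in>STs (s1 K) (s2 K). {#me t#})"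
      unfolding image_mset_sum[OF fS] sumS by (simp add: lessThan_Suc_atMost[symmetric] edge_def)
    have Y: "image_mset (fl \<circ> edge) (mset_set S) = (\<Sum>i<K. \<Sum>t\<in>STs (s1 i) (s2 i). {#fl (ceC \<alpha> \<beta> (Cs ! i) t)#}) + (\<Sum>t\<in>STs (s1 K) (s2 K). {#fl (me t)#})"
      unfolding image_mset_sum[OF fS] sumS by (simp add: lessThan_Suc_atMost[symmetric] edge_def)
    have "(\<Sum>i<K. cycle_edges (swC \<alpha> \<beta> (Cs ! i) (s1 i) (s2 i))) + (\<Sum>i<K. \<Sum>t\<in>STs (s1 i) (s2 i). {#ceC \<alpha> \<beta> (Cs ! i) t#})
       = (\<Sum>i<K. cycle_edges (swC \<alpha> \<beta> (Cs ! i) (s1 i) (s2 i)) + (\<Sum>t\<in>STs (s1 i) (s2 i). {#ceC \<alpha> \<beta> (Cs ! i) t#}))"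
      by (simp add: sum.distrib)
    also have "\<dots> = (\<Sum>i<K. cycle_edges (Cs ! i) + (\<Sum>t\<in>STs (s1 i) (s2 i). {#fl (ceC \<alpha> \<beta> (Cs ! i) t)#}))"
      using sw_i by (intro sum.cong) (auto simp: fl_def)
    also have "\<dots> = (\<Sum>i<K. cycle_edges (Cs ! i)) + (\<Sum>i<K. \<Sum>t\<in>STs (s1 i) (s2 i). {#fl (ceC \<alpha> \<beta> (Cs ! i) t)#})"
      by (simp add: sum.distrib)
    finally have E: "(\<Sum>i<K. cycle_edges (swC \<alpha> \<beta> (Cs ! i) (s1 i) (s2 i))) + (\<Sum>i<K. \<Sum>t\<in>STs (s1 i) (s2 i). {#ceC \<alpha> \<beta> (Cs ! i) t#})
       = (\<Sum>i<K. cycle_edges (Cs ! i)) + (\<Sum>i<K. \<Sum>t\<in>STs (s1 i) (s2 i). {#fl (ceC \<alpha> \<beta> (Cs ! i) t)#})" .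
    show ?thesis unfolding X Y sl G sl0 by (rule four_sum[OF E blockK])
  qed
  have Ssplit: "mset_set S = mset_set (S - D) + mset_set (S \<inter> D)"
  proof -
    have "S = (S - D) \<union> (S \<inter> D)" by auto
    then show ?thesis using fS by (metis mset_set_Union finite_Diff finite_Int Diff_disjoint Int_Diff_disjoint inf_commute)
  qed
  have final: "sum_list (map cycle_edges Cs') + I' + Xd = G + image_mset (flip \<alpha> \<beta>) Xd"
  proof -
    define X0 where "X0 = image_mset edge (mset_set (S - D))"
    have y: "image_mset (fl \<circ> edge) (mset_set S) = X0 + image_mset fl Xd"
    proof -
      have "image_mset (fl \<circ> edge) (mset_set S) = image_mset fl X0 + image_mset fl Xd"
        unfolding Ssplit X0_def Xd_def by (simp add: multiset.map_comp)
      then show ?thesis using balS by (simp add: X0_def)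
    qed
    have x: "image_mset edge (mset_set S) = X0 + Xd" unfolding Ssplit X0_def Xd_def by simp
    have "(sum_list (map cycle_edges Cs') + I' + Xd) + X0 = (G + image_mset fl Xd) + X0"
      using mainX unfolding x y by (simp add: ac_simps)
    then show ?thesis by (simp add: fl_def)
  qed
  have XdD: "Xd \<subseteq># Dd" unfolding Xd_def imD[symmetric]
    by (rule image_mset_subseteq_mono) (rule subset_imp_msubset_mset_set; use fD in auto)
  have sz: "size Xd = 2" using cardS by (simp add: Xd_def)
  have d0X: "d0 \<in># Xd" using dS dD ed fS by (auto simp: Xd_def)
  show ?thesis using XdD sz d0X cycs' mapl I'opt final by blast
qed




lemma mset_split_two:
  assumes "i < length Cs" "j < length Cs" "i \<noteq> j"
  shows "mset (map h Cs) = {#h (Cs ! i), h (Cs ! j)#} + mset (map h (map ((!) Cs) (filter (\<lambda>k. k \<noteq> i \<and> k \<noteq> j) [0..<length Cs])))"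
proof -
  let ?P = "\<lambda>k. k \<noteq> i \<and> k \<noteq> j"
  have u: "mset [0..<length Cs] = filter_mset ?P (mset [0..<length Cs]) + filter_mset (\<lambda>k. \<not> ?P k) (mset [0..<length Cs])"
    by (rule multiset_partition)
  have "filter_mset (\<lambda>k. \<not> ?P k) (mset [0..<length Cs]) = mset_set {k \<in> {0..<length Cs}. \<not> ?P k}"
    by (simp add: filter_mset_mset_set)
  also have "{k \<in> {0..<length Cs}. \<not> ?P k} = {i, j}" using assms by auto
  also have "mset_set {i, j} = {#i, j#}" using assms by simp
  finally have u2: "mset [0..<length Cs] = {#i, j#} + mset (filter ?P [0..<length Cs])"
    using u by (simp add: mset_filter)
  have "mset (map h Cs) = mset (map (h \<circ> (!) Cs) [0..<length Cs])"
    by (metis map_map map_nth)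
  also have "\<dots> = image_mset (h \<circ> (!) Cs) (mset [0..<length Cs])" by simp
  also have "\<dots> = {#h (Cs ! i), h (Cs ! j)#} + mset (map h (map ((!) Cs) (filter ?P [0..<length Cs])))"
    unfolding u2 by simp
  finally show ?thesis .
qed

lemma flower_extract:
  assumes fl: "is_flower (M' + {#int m, 2#}) L" and m3: "m \<ge> 3"
  shows "\<exists>x A y Rest. L = cycle_edges (x # A) + cycle_edges [x, y] + sum_list (map cycle_edges Rest)
     \<and> length A + 1 = m \<and> distinct (x # A) \<and> y \<notin> set (x # A)
     \<and> (\<forall>c\<in>set Rest. is_cycle_list c) \<and> mset (map (\<lambda>vs. int (length vs)) Rest) = M'
     \<and> (\<forall>c\<in>set Rest. set c \<inter> set (x # A) = {x} \<and> y \<notin> set c \<and> x \<in> set c)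
     \<and> (\<forall>i<length Rest. \<forall>j<length Rest. i \<noteq> j \<longrightarrow> set (Rest ! i) \<inter> set (Rest ! j) = {x})"
proof -
  obtain Cs where Cs: "Cs \<noteq> []" "\<forall>vs\<in>set Cs. is_cycle_list vs"
    "mset (map (\<lambda>vs. int (length vs)) Cs) = M' + {#int m, 2#}" "L = sum_list (map cycle_edges Cs)"
    "length Cs \<ge> 2 \<longrightarrow> (\<exists>x. \<forall>i<length Cs. \<forall>j<length Cs. i \<noteq> j \<longrightarrow> set (Cs ! i) \<inter> set (Cs ! j) = {x})"
    using fl unfolding is_flower_def by blast
  have "int m \<in># mset (map (\<lambda>vs. int (length vs)) Cs)" using Cs(3) by simp
  then obtain i where i: "i < length Cs" "int (length (Cs ! i)) = int m"
    by (auto simp: in_set_conv_nth)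
  have "2 \<in># mset (map (\<lambda>vs. int (length vs)) Cs)" using Cs(3) by simp
  then obtain j where j: "j < length Cs" "int (length (Cs ! j)) = 2"
    by (auto simp: in_set_conv_nth)
  have li: "length (Cs ! i) = m" using i by simp
  have lj: "length (Cs ! j) = 2" using j by simp
  have ij: "i \<noteq> j" using li lj m3 by auto
  have "length Cs \<ge> 2" using i j ij by linarith
  then obtain x where x: "\<forall>i<length Cs. \<forall>j<length Cs. i \<noteq> j \<longrightarrow> set (Cs ! i) \<inter> set (Cs ! j) = {x}"
    using Cs(5) by blast
  define idx where "idx = filter (\<lambda>k. k \<noteq> i \<and> k \<noteq> j) [0..<length Cs]"
  define Rest where "Rest = map ((!) Cs) idx"
  have msplit: "\<And>h. mset (map h Cs) = {#h (Cs ! i), h (Cs ! j)#} + mset (map h Rest)"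
    using mset_split_two[OF i(1) j(1) ij] by (simp add: Rest_def idx_def)
  have Lsplit: "L = cycle_edges (Cs ! i) + cycle_edges (Cs ! j) + sum_list (map cycle_edges Rest)"
  proof -
    have "L = sum_mset (mset (map cycle_edges Cs))" using Cs(4) by (simp only: sum_mset_sum_list)
    also have "\<dots> = cycle_edges (Cs ! i) + cycle_edges (Cs ! j) + sum_mset (mset (map cycle_edges Rest))"
      unfolding msplit by simp
    finally show ?thesis by (simp only: sum_mset_sum_list)
  qed
  have Mlen: "mset (map (\<lambda>vs. int (length vs)) Rest) = M'"
    using Cs(3) msplit[of "\<lambda>vs. int (length vs)"] li lj by (simp add: add_mset_commute)
  have xij: "set (Cs ! i) \<inter> set (Cs ! j) = {x}" using x i j ij by auto
  have ci: "is_cycle_list (Cs ! i)" "is_cycle_list (Cs ! j)" using Cs(2) i j by auto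
  have xi: "x \<in> set (Cs ! i)" using xij by auto
  obtain xs ys where cixs: "Cs ! i = xs @ x # ys" using split_list[OF xi] by blast
  define A where "A = ys @ xs"
  have ceA: "cycle_edges (x # A) = cycle_edges (Cs ! i)" using cixs cycle_edges_rot_decomp by (simp add: A_def)
  have setA: "set (x # A) = set (Cs ! i)" using cixs by (auto simp: A_def)
  have dA: "distinct (x # A)" using ci(1) cixs by (auto simp: A_def is_cycle_list_def)
  have lA: "length A + 1 = m" using li cixs by (simp add: A_def)
  obtain p q where pq: "Cs ! j = [p, q]" using lj
    by (metis One_nat_def Suc_1 length_0_conv length_Suc_conv)
  have pqd: "p \<noteq> q" using ci(2) pq by (auto simp: is_cycle_list_def)
  have xpq: "x = p \<or> x = q" using xij pq by auto
  obtain y where y: "cycle_edges (Cs ! j) = cycle_edges [x, y]" "set (Cs ! j) = {x, y}" "y \<noteq> x"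
  proof (cases "x = p")
    case True then show ?thesis using that[of q] pq pqd by auto
  next
    case False then have "x = q" using xpq by auto
    then show ?thesis using that[of p] pq pqd by (auto simp: cycle_edges_two insert_commute)
  qed
  have ynA: "y \<notin> set (x # A)" using xij y setA by auto
  have idxp: "\<And>a. a < length idx \<Longrightarrow> idx ! a < length Cs \<and> idx ! a \<noteq> i \<and> idx ! a \<noteq> j"
  proof -
    fix a assume "a < length idx"
    then have "idx ! a \<in> set idx" by simp
    then show "idx ! a < length Cs \<and> idx ! a \<noteq> i \<and> idx ! a \<noteq> j" by (auto simp: idx_def)
  qed
  have didx: "distinct idx" by (simp add: idx_def)
  have restc: "\<forall>c\<in>set Rest. is_cycle_list c"
  proof
    fix c assume "c \<in> set Rest"
    then obtain a where a: "a < length idx" "c = Cs ! (idx ! a)" by (auto simp: Rest_def in_set_conv_nth)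
    then have "c \<in> set Cs" using idxp[OF a(1)] by auto
    then show "is_cycle_list c" using Cs(2) by auto
  qed
  have restx: "\<forall>c\<in>set Rest. set c \<inter> set (x # A) = {x} \<and> y \<notin> set c \<and> x \<in> set c"
  proof
    fix c assume "c \<in> set Rest"
    then obtain a where a: "a < length idx" "c = Cs ! (idx ! a)" by (auto simp: Rest_def in_set_conv_nth)
    have k: "idx ! a < length Cs" "idx ! a \<noteq> i" "idx ! a \<noteq> j" using idxp[OF a(1)] by auto
    have h1: "set c \<inter> set (Cs ! i) = {x}" using x k i a(2) by auto
    have h2: "set c \<inter> set (Cs ! j) = {x}" using x k j a(2) by auto
    show "set c \<inter> set (x # A) = {x} \<and> y \<notin> set c \<and> x \<in> set c" using h1 h2 setA y by auto
  qed
  have restp: "\<forall>a<length Rest. \<forall>b<length Rest. a \<noteq> b \<longrightarrow> set (Rest ! a) \<inter> set (Rest ! b) = {x}"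
  proof (intro allI impI)
    fix a b assume ab: "a < length Rest" "b < length Rest" "a \<noteq> b"
    have "idx ! a \<noteq> idx ! b" using ab didx by (simp add: Rest_def nth_eq_iff_index_eq)
    then show "set (Rest ! a) \<inter> set (Rest ! b) = {x}" using x idxp ab by (simp add: Rest_def)
  qed
  show ?thesis
    using Lsplit ceA y(1) lA dA ynA restc Mlen restx restp by (intro exI[of _ x] exI[of _ A] exI[of _ y] exI[of _ Rest]) auto
qed




lemma finite_edges_Kn: "finite (edges_Kn n)"
proof -
  have "edges_Kn n \<subseteq> Pow {0..<n}" by (auto simp: edges_Kn_def)
  then show ?thesis by (rule finite_subset) auto
qed

lemma count_lamKn: "count (lamKn lam n) e = (if e \<in> edges_Kn n then lam else 0)"
  unfolding lamKn_def count_sum using finite_edges_Kn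
  by (simp add: count_replicate_mset sum.delta)

lemma edges_Kn_iff: "e \<in> edges_Kn n \<longleftrightarrow> (\<exists>i j. i \<noteq> j \<and> i < n \<and> j < n \<and> e = {i, j})"
proof
  assume "e \<in> edges_Kn n"
  then obtain i j where "i < j" "j < n" "e = {i, j}" unfolding edges_Kn_def by blast
  then show "\<exists>i j. i \<noteq> j \<and> i < n \<and> j < n \<and> e = {i, j}" by (intro exI[of _ i] exI[of _ j]) auto
next
  assume "\<exists>i j. i \<noteq> j \<and> i < n \<and> j < n \<and> e = {i, j}"
  then obtain i j where ij: "i \<noteq> j" "i < n" "j < n" "e = {i, j}" by blast
  show "e \<in> edges_Kn n"
  proof (cases "i < j")
    case True then show ?thesis using ij unfolding edges_Kn_def by blast
  next
    case False then have "j < i" using ij by simp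
    then show ?thesis using ij unfolding edges_Kn_def by (blast intro: insert_commute)
  qed
qed

lemma sw_lt: "\<alpha> < n \<Longrightarrow> \<beta> < n \<Longrightarrow> i < n \<Longrightarrow> sw \<alpha> \<beta> i < n"
  by (simp add: sw_def)

lemma sw_inj: "sw \<alpha> \<beta> i = sw \<alpha> \<beta> j \<Longrightarrow> i = j"
  by (metis sw_sw)

lemma flip_edges_Kn1: "\<alpha> < n \<Longrightarrow> \<beta> < n \<Longrightarrow> e \<in> edges_Kn n \<Longrightarrow> flip \<alpha> \<beta> e \<in> edges_Kn n"
proof -
  assume a: "\<alpha> < n" "\<beta> < n" "e \<in> edges_Kn n"
  then obtain i j where ij: "i \<noteq> j" "i < n" "j < n" "e = {i, j}" unfolding edges_Kn_iff by blast
  have "sw \<alpha> \<beta> i \<noteq> sw \<alpha> \<beta> j" using ij(1) sw_inj by blast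
  moreover have "sw \<alpha> \<beta> i < n" "sw \<alpha> \<beta> j < n" using a ij sw_lt by auto
  moreover have "flip \<alpha> \<beta> e = {sw \<alpha> \<beta> i, sw \<alpha> \<beta> j}" using ij by simp
  ultimately show ?thesis unfolding edges_Kn_iff by blast
qed

lemma flip_edges_Kn: "\<alpha> < n \<Longrightarrow> \<beta> < n \<Longrightarrow> flip \<alpha> \<beta> e \<in> edges_Kn n \<longleftrightarrow> e \<in> edges_Kn n"
proof -
  assume "\<alpha> < n" "\<beta> < n"
  then show ?thesis using flip_edges_Kn1[of \<alpha> n \<beta> e] flip_edges_Kn1[of \<alpha> n \<beta> "flip \<alpha> \<beta> e"] by auto
qed

lemma count_image_flip: "count (image_mset (flip \<alpha> \<beta>) A) e = count A (flip \<alpha> \<beta> e)"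
proof -
  have "flip \<alpha> \<beta> -` {e} = {flip \<alpha> \<beta> e}"
  proof (rule set_eqI)
    fix x
    have "flip \<alpha> \<beta> x = e \<longleftrightarrow> x = flip \<alpha> \<beta> e"
    proof
      assume "flip \<alpha> \<beta> x = e"
      then have "flip \<alpha> \<beta> (flip \<alpha> \<beta> x) = flip \<alpha> \<beta> e" by simp
      then show "x = flip \<alpha> \<beta> e" by simp
    qed simp
    then show "x \<in> flip \<alpha> \<beta> -` {e} \<longleftrightarrow> x \<in> {flip \<alpha> \<beta> e}" by simp
  qed
  then show ?thesis by (cases "flip \<alpha> \<beta> e \<in># A") (auto simp: count_image_mset Int_commute count_eq_zero_iff)
qed

lemma flip_lamKn: "\<alpha> < n \<Longrightarrow> \<beta> < n \<Longrightarrow> image_mset (flip \<alpha> \<beta>) (lamKn lam n) = lamKn lam n"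
  by (rule multiset_eqI) (simp add: count_image_flip count_lamKn flip_edges_Kn)

lemma filter_image_flip: "filter_mset (touch \<alpha> \<beta>) (image_mset (flip \<alpha> \<beta>) A) = image_mset (flip \<alpha> \<beta>) (filter_mset (touch \<alpha> \<beta>) A)"
  by (induction A) auto

lemma pm_edge:
  assumes "perfect_matching n I" "v < n"
  shows "\<exists>w. filter_mset (\<lambda>e. v \<in> e) I = {#{v, w}#} \<and> w \<noteq> v \<and> w < n"
proof -
  have "size (filter_mset (\<lambda>e. v \<in> e) I) = 1" using assms by (simp add: perfect_matching_def deg_def)
  then obtain e where e: "filter_mset (\<lambda>e. v \<in> e) I = {#e#}" using size_1_singleton_mset by blast
  then have "e \<in># filter_mset (\<lambda>e. v \<in> e) I" by simp
  then have "e \<in># I" "v \<in> e" by simp_all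
  then obtain i j where ij: "i \<noteq> j" "i < n" "j < n" "e = {i, j}" using assms(1) by (auto simp: perfect_matching_def)
  show ?thesis
  proof (cases "v = i")
    case True then show ?thesis using e ij by (intro exI[of _ j]) auto
  next
    case False then have "v = j" using \<open>v \<in> e\<close> ij by auto
    then show ?thesis using e ij by (intro exI[of _ i]) (auto simp: insert_commute)
  qed
qed

lemma filter_touch_split: "filter_mset (touch \<alpha> \<beta>) I =
   filter_mset (\<lambda>e. \<beta> \<notin> e) (filter_mset (\<lambda>e. \<alpha> \<in> e) I) + filter_mset (\<lambda>e. \<alpha> \<notin> e) (filter_mset (\<lambda>e. \<beta> \<in> e) I)"
  by (induction I) (auto simp: touch_def)

lemma matching_setup:
  assumes I: "I = {#} \<or> (perfect_matching n I \<and> \<alpha> < n \<and> \<beta> < n)" and ab: "\<alpha> \<noteq> \<beta>"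
  shows "\<exists>MT me Isw. (MT = {} \<or> MT = {0::nat,1}) \<and> filter_mset (touch \<alpha> \<beta>) I = (\<Sum>t\<in>MT. {#me t#})
     \<and> (MT = {0,1} \<longrightarrow> Isw + {#me 0, me 1#} = I + {#flip \<alpha> \<beta> (me 0), flip \<alpha> \<beta> (me 1)#} \<and> perfect_matching n Isw)
     \<and> (I = {#} \<longrightarrow> MT = {})"
proof (cases "I = {#}")
  case True
  then show ?thesis by (intro exI[of _ "{}"]) auto
next
  case False
  then have pm: "perfect_matching n I" and an: "\<alpha> < n" and bn: "\<beta> < n" using I by auto
  obtain va where va: "filter_mset (\<lambda>e. \<alpha> \<in> e) I = {#{\<alpha>, va}#}" "va \<noteq> \<alpha>" "va < n" using pm_edge[OF pm an] by auto
  obtain vb where vb: "filter_mset (\<lambda>e. \<beta> \<in> e) I = {#{\<beta>, vb}#}" "vb \<noteq> \<beta>" "vb < n" using pm_edge[OF pm bn] by auto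
  show ?thesis
  proof (cases "va = \<beta>")
    case True
    have "{\<beta>, vb} = {\<alpha>, \<beta>}"
    proof -
      have "{\<alpha>, va} \<in># filter_mset (\<lambda>e. \<alpha> \<in> e) I" using va by simp
      then have "{\<alpha>, \<beta>} \<in># I" using True by simp
      then have "{\<alpha>, \<beta>} \<in># filter_mset (\<lambda>e. \<beta> \<in> e) I" by simp
      then show ?thesis using vb by simp
    qed
    then have "filter_mset (touch \<alpha> \<beta>) I = {#}" using va vb True
      by (simp add: filter_touch_split insert_commute)
    then show ?thesis by (intro exI[of _ "{}"]) auto
  next
    case False
    have vba: "vb \<noteq> \<alpha>"
    proof
      assume "vb = \<alpha>"
      have "{\<beta>, vb} \<in># filter_mset (\<lambda>e. \<beta> \<in> e) I" using vb by simp
      then have "{\<beta>, \<alpha>} \<in># I" using \<open>vb = \<alpha>\<close> by simp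
      then have "{\<beta>, \<alpha>} \<in># filter_mset (\<lambda>e. \<alpha> \<in> e) I" by simp
      then show False using va False by (auto simp: doubleton_eq_iff)
    qed
    define me where "me = (\<lambda>t::nat. if t = 0 then {\<alpha>, va} else {\<beta>, vb})"
    have ft: "filter_mset (touch \<alpha> \<beta>) I = {#{\<alpha>, va}, {\<beta>, vb}#}"
      using va vb False vba ab by (simp add: filter_touch_split)
    have "{\<alpha>, va} \<in># filter_mset (\<lambda>e. \<alpha> \<in> e) I" "{\<beta>, vb} \<in># filter_mset (\<lambda>e. \<beta> \<in> e) I" using va vb by simp_all
    then have e1: "{\<alpha>, va} \<in># I" "{\<beta>, vb} \<in># I" by simp_all
    have ne: "{\<alpha>, va} \<noteq> {\<beta>, vb}" using ab vba by (auto simp: doubleton_eq_iff)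
    obtain I0 where I0: "I = I0 + {#{\<alpha>, va}, {\<beta>, vb}#}"
    proof -
      have "{\<beta>, vb} \<in># I - {#{\<alpha>, va}#}" using e1 ne by (simp add: in_diff_count)
      then have "{#{\<alpha>, va}, {\<beta>, vb}#} \<subseteq># I" using e1 by (simp add: insert_subset_eq_iff)
      then have "I = (I - {#{\<alpha>, va}, {\<beta>, vb}#}) + {#{\<alpha>, va}, {\<beta>, vb}#}"
        by (simp only: subset_mset.diff_add)
      then show ?thesis using that by blast
    qed
    define Isw where "Isw = I0 + {#{\<beta>, va}, {\<alpha>, vb}#}"
    have swa: "sw \<alpha> \<beta> va = va" "sw \<alpha> \<beta> vb = vb" using va vb False vba by (auto simp: sw_def)
    have eq: "Isw + {#me 0, me 1#} = I + {#flip \<alpha> \<beta> (me 0), flip \<alpha> \<beta> (me 1)#}"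
      by (simp add: Isw_def I0 me_def swa add_mset_commute)
    have pmsw: "perfect_matching n Isw"
      unfolding perfect_matching_def
    proof
      show "\<forall>e\<in>#Isw. \<exists>i j. i \<noteq> j \<and> i < n \<and> j < n \<and> e = {i, j}"
        using pm va vb False vba an bn unfolding Isw_def perfect_matching_def I0 by auto
      show "\<forall>v<n. deg Isw v = 1"
      proof (intro allI impI)
        fix v assume "v < n"
        then have "deg I v = 1" using pm by (simp add: perfect_matching_def)
        moreover have "deg Isw v = deg I v" using va(2) vb(2) vba False
          unfolding Isw_def I0 by auto
        ultimately show "deg Isw v = 1" by simp
      qed
    qed
    show ?thesis using ft eq pmsw by (intro exI[of _ "{0,1}"] exI[of _ me] exI[of _ Isw]) (auto simp: me_def False)
  qed
qed

lemma flower_build: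
  assumes "is_cycle_list core" "\<forall>c\<in>set Rest. is_cycle_list c \<and> set c \<inter> set core = {x}"
    "\<forall>i<length Rest. \<forall>j<length Rest. i \<noteq> j \<longrightarrow> set (Rest ! i) \<inter> set (Rest ! j) = {x}"
    "mset (map (\<lambda>vs. int (length vs)) Rest) = M'"
  shows "is_flower (M' + {#int (length core)#}) (cycle_edges core + sum_list (map cycle_edges Rest))"
  unfolding is_flower_def
proof (rule exI[of _ "core # Rest"], intro conjI)
  show "core # Rest \<noteq> []" by simp
  show "cycle_edges core + sum_list (map cycle_edges Rest) = sum_list (map cycle_edges (core # Rest))" by simp
  show "\<forall>vs\<in>set (core # Rest). is_cycle_list vs" using assms by auto
  show "mset (map (\<lambda>vs. int (length vs)) (core # Rest)) = M' + {#int (length core)#}" using assms by simp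
  show "2 \<le> length (core # Rest) \<longrightarrow> (\<exists>x. \<forall>i<length (core # Rest). \<forall>j<length (core # Rest). i \<noteq> j \<longrightarrow> set ((core # Rest) ! i) \<inter> set ((core # Rest) ! j) = {x})"
  proof (rule impI, rule exI[of _ x], intro allI impI)
    fix i j assume i: "i < length (core # Rest)" and j: "j < length (core # Rest)" and ij: "i \<noteq> j"
    have h: "\<forall>k<length Rest. set (Rest ! k) \<inter> set core = {x}" using assms(2) nth_mem by blast
    show "set ((core # Rest) ! i) \<inter> set ((core # Rest) ! j) = {x}"
    proof (cases i)
      case 0
      then obtain j' where Suc: "j = Suc j'" using ij by (cases j) auto
      then have "set (Rest ! j') \<inter> set core = {x}" using h j by auto
      then show ?thesis using 0 Suc by (simp add: Int_commute)
    next
      case (Suc i')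
      show ?thesis
      proof (cases j)
        case 0
        then show ?thesis using h i Suc by auto
      next
        case (Suc j')
        then show ?thesis using \<open>i = Suc i'\<close> i j ij assms(3) by auto
      qed
    qed
  qed
qed

lemma even_deg_flower: "is_flower A F \<Longrightarrow> even (deg F v)"
  unfolding is_flower_def using deg_sum_list_even by auto

lemma finish:
  assumes GL: "G + L = lamKn lam n"
    and par: "if even (lam * (n - 1)) then (\<forall>v<n. even (deg G v)) else (\<forall>v<n. odd (deg G v))"
    and eL: "\<And>v. even (deg L v)" and eL2: "\<And>v. even (deg L2 v)"
    and eq: "G2 + L2 = G + L"
    and cyc: "\<forall>c\<in>set Cs2. is_cycle_list c" and len: "mset (map (\<lambda>vs. int (length vs)) Cs2) = M2"
    and dec: "G2 = sum_list (map cycle_edges Cs2) + I2"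
    and Ich: "((\<forall>v<n. even (deg G v)) \<and> I2 = {#}) \<or> ((\<forall>v<n. odd (deg G v)) \<and> perfect_matching n I2)"
  shows "packing_with_leave lam n M2 L2"
proof -
  have degeq: "even (deg G2 v) \<longleftrightarrow> even (deg G v)" for v
  proof -
    have "deg G2 v + deg L2 v = deg G v + deg L v" using eq by (metis deg_plus)
    then show ?thesis using eL[of v] eL2[of v] by presburger
  qed
  have sub: "G2 \<subseteq># lamKn lam n" using eq GL by (metis mset_subset_eq_add_left)
  have Leq: "L2 = lamKn lam n - G2" using eq GL by (metis add_diff_cancel_left')
  have par2: "if even (lam * (n - 1)) then (\<forall>v<n. even (deg G2 v)) else (\<forall>v<n. odd (deg G2 v))"
    using par degeq by auto
  have md: "M_decomposition n M2 G2"
    unfolding M_decomposition_def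
  proof (cases "(\<forall>v<n. even (deg G v)) \<and> I2 = {#}")
    case True
    then show "((\<forall>v<n. even (deg G2 v)) \<and> (\<exists>Cs. (\<forall>vs\<in>set Cs. is_cycle_list vs) \<and> mset (map (\<lambda>vs. int (length vs)) Cs) = M2 \<and> G2 = sum_list (map cycle_edges Cs))) \<or>
      ((\<forall>v<n. odd (deg G2 v)) \<and> (\<exists>Cs I. (\<forall>vs\<in>set Cs. is_cycle_list vs) \<and> mset (map (\<lambda>vs. int (length vs)) Cs) = M2 \<and> perfect_matching n I \<and> G2 = sum_list (map cycle_edges Cs) + I))"
      using degeq cyc len dec by auto
  next
    case False
    then have "(\<forall>v<n. odd (deg G v)) \<and> perfect_matching n I2" using Ich by auto
    then show "((\<forall>v<n. even (deg G2 v)) \<and> (\<exists>Cs. (\<forall>vs\<in>set Cs. is_cycle_list vs) \<and> mset (map (\<lambda>vs. int (length vs)) Cs) = M2 \<and> G2 = sum_list (map cycle_edges Cs))) \<or>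
      ((\<forall>v<n. odd (deg G2 v)) \<and> (\<exists>Cs I. (\<forall>vs\<in>set Cs. is_cycle_list vs) \<and> mset (map (\<lambda>vs. int (length vs)) Cs) = M2 \<and> perfect_matching n I \<and> G2 = sum_list (map cycle_edges Cs) + I))"
      using degeq cyc len dec by blast
  qed
  show ?thesis unfolding packing_with_leave_def using sub Leq par2 md by blast
qed




lemma edge_lt: "e \<in> edges_Kn n \<Longrightarrow> v \<in> e \<Longrightarrow> v < n"
  by (auto simp: edges_Kn_def)

lemma filter_sum_list_none:
  "\<forall>c\<in>set Rest. filter_mset P (cycle_edges c) = {#} \<Longrightarrow> filter_mset P (sum_list (map cycle_edges Rest)) = {#}"
  by (induction Rest) auto

lemma len3: "length xs \<ge> 3 \<Longrightarrow> \<exists>a b c r. xs = a # b # c # r"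
  by (auto simp: Suc_le_length_iff numeral_3_eq_3)

lemma len2: "length xs = 2 \<Longrightarrow> \<exists>a b. xs = [a, b]"
  by (auto simp: length_Suc_conv numeral_2_eq_2)

theorem mainTheorem9:
  fixes M M' :: "int multiset" and lam n m :: nat
  assumes "lam > 0" and "n > 0" and "m \<ge> 3"
    and "\<exists>L. packing_with_leave lam n M L \<and> leave_is_flower (M' + {#int m, 2#}) L"
  shows "\<exists>L. packing_with_leave lam n (M + {#3#}) L \<and> leave_is_flower (M' + {#int m - 1#}) L"
proof -
  from assms(4) obtain L where P: "packing_with_leave lam n M L" and F: "is_flower (M' + {#int m, 2#}) L"
    unfolding leave_is_flower_def by blast
  from P obtain G where Gsub: "G \<subseteq># lamKn lam n" and Ld: "L = lamKn lam n - G"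
    and par: "if even (lam * (n - 1)) then (\<forall>v<n. even (deg G v)) else (\<forall>v<n. odd (deg G v))"
    and md: "M_decomposition n M G"
    unfolding packing_with_leave_def by blast
  have GL: "G + L = lamKn lam n" using Gsub Ld by simp
  have eL: "\<And>v. even (deg L v)" using F by (rule even_deg_flower)
  obtain x A y Rest where Lx: "L = cycle_edges (x # A) + cycle_edges [x, y] + sum_list (map cycle_edges Rest)"
    and lA: "length A + 1 = m" and dA: "distinct (x # A)" and ynA: "y \<notin> set (x # A)"
    and restc: "\<forall>c\<in>set Rest. is_cycle_list c" and Mlen: "mset (map (\<lambda>vs. int (length vs)) Rest) = M'"
    and restx: "\<forall>c\<in>set Rest. set c \<inter> set (x # A) = {x} \<and> y \<notin> set c \<and> x \<in> set c"
    and restp: "\<forall>i<length Rest. \<forall>j<length Rest. i \<noteq> j \<longrightarrow> set (Rest ! i) \<inter> set (Rest ! j) = {x}"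
    using flower_extract[OF F assms(3)] by blast
  have inL: "e \<in> edges_Kn n" if "e \<in># L" for e
  proof -
    have "count L e \<le> count (lamKn lam n) e" using GL by (metis count_union le_add2)
    moreover have "count L e > 0" using that by simp
    ultimately have c: "count (lamKn lam n) e > 0" by linarith
    show ?thesis
    proof (rule ccontr)
      assume "e \<notin> edges_Kn n"
      then have "count (lamKn lam n) e = 0" by (simp only: count_lamKn if_False)
      then show False using c by simp
    qed
  qed
  have xyL: "{x, y} \<in># L" using Lx by (simp add: cycle_edges_two)
  have xn: "x < n" and yn: "y < n" using inL[OF xyL] edge_lt by auto
  obtain Cs0 I where cyc0: "\<forall>c\<in>set Cs0. is_cycle_list c" and len0: "mset (map (\<lambda>vs. int (length vs)) Cs0) = M"
    and G0: "G = sum_list (map cycle_edges Cs0) + I"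
    and Ich: "((\<forall>v<n. even (deg G v)) \<and> I = {#}) \<or> ((\<forall>v<n. odd (deg G v)) \<and> perfect_matching n I)"
  proof -
    consider "(\<forall>v<n. even (deg G v))" "\<exists>Cs. (\<forall>vs\<in>set Cs. is_cycle_list vs) \<and> mset (map (\<lambda>vs. int (length vs)) Cs) = M \<and> G = sum_list (map cycle_edges Cs)"
      | "(\<forall>v<n. odd (deg G v))" "\<exists>Cs I. (\<forall>vs\<in>set Cs. is_cycle_list vs) \<and> mset (map (\<lambda>vs. int (length vs)) Cs) = M \<and> perfect_matching n I \<and> G = sum_list (map cycle_edges Cs) + I"
      using md unfolding M_decomposition_def by blast
    then show ?thesis
    proof cases
      case 1
      then obtain Cs where "\<forall>vs\<in>set Cs. is_cycle_list vs" "mset (map (\<lambda>vs. int (length vs)) Cs) = M" "G = sum_list (map cycle_edges Cs) + {#}"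
        by auto
      then show ?thesis using that 1(1) by blast
    next
      case 2
      then obtain Cs I where "\<forall>vs\<in>set Cs. is_cycle_list vs" "mset (map (\<lambda>vs. int (length vs)) Cs) = M" "perfect_matching n I" "G = sum_list (map cycle_edges Cs) + I"
        by blast
      then show ?thesis using that 2(1) by blast
    qed
  qed
  have xy: "x \<noteq> y" using ynA by auto
  have eLrest: "\<And>L2 cor. is_flower (M' + {#int (length cor)#}) L2 \<Longrightarrow> even (deg L2 v)" for v
    using even_deg_flower by blast
  show ?thesis
  proof (cases "m = 3")
    case True
    then obtain a1 a2 where A: "A = [a1, a2]" using lA len2[of A] by auto
    define L2 where "L2 = cycle_edges [x, y] + sum_list (map cycle_edges Rest)"
    have pk: "packing_with_leave lam n (M + {#3#}) L2"
    proof (rule finish[OF GL par eL])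
      show "even (deg L2 v)" for v
        using deg_sum_list_even[OF restc, of v] deg_cycle_even[of "[x,y]" v] xy
        by (simp add: L2_def is_cycle_list_def)
      show "(sum_list (map cycle_edges (Cs0 @ [x # A])) + I) + L2 = G + L"
        by (simp add: L2_def Lx G0 ac_simps)
      show "\<forall>c\<in>set (Cs0 @ [x # A]). is_cycle_list c" using cyc0 dA lA True by (auto simp: is_cycle_list_def)
      show "mset (map (\<lambda>vs. int (length vs)) (Cs0 @ [x # A])) = M + {#3#}" using len0 A by simp
    qed (use Ich in auto)
    have fl: "is_flower (M' + {#int (length [x, y])#}) L2"
      unfolding L2_def
    proof (rule flower_build)
      show "is_cycle_list [x, y]" using xy by (simp add: is_cycle_list_def)
      show "\<forall>c\<in>set Rest. is_cycle_list c \<and> set c \<inter> set [x, y] = {x}" using restc restx by auto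
    qed (use restp Mlen in auto)
    have "int (length [x, y]) = int m - 1" using True by simp
    then show ?thesis using pk fl unfolding leave_is_flower_def by (intro exI[of _ L2]) simp
  next
    case False
    then have m4: "m \<ge> 4" using assms(3) by simp
    then obtain a1 a2 a3 R' where A: "A = a1 # a2 # a3 # R'" using lA len3[of A] by auto
    have dist: "x \<noteq> a1" "x \<noteq> a2" "x \<noteq> a3" "a1 \<noteq> a2" "a1 \<noteq> a3" "a2 \<noteq> a3"
      "x \<notin> set R'" "a1 \<notin> set R'" "a2 \<notin> set R'" "a3 \<notin> set R'" "distinct R'"
      using dA A by auto
    have ydist: "y \<noteq> x" "y \<noteq> a1" "y \<noteq> a2" "y \<noteq> a3" "y \<notin> set R'" using ynA A by auto
    have ceA: "cycle_edges (x # A) = add_mset {x, a1} (add_mset {a1, a2} (add_mset {a2, a3} (pe (a3 # R' @ [x]))))"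
      by (simp add: A cycle_edges_Cons)
    have a2n: "a2 < n"
    proof -
      have "{a1, a2} \<in># L" using Lx ceA by simp
      then show ?thesis using inL edge_lt by blast
    qed
    have ab: "y \<noteq> a2" using ydist by simp
    obtain Cs where cyc: "\<forall>c\<in>set Cs. is_cycle_list c \<and> normC y a2 c" and mlen: "map length Cs = map length Cs0"
      and sCs: "sum_list (map cycle_edges Cs) = sum_list (map cycle_edges Cs0)"
      using norm_list[OF cyc0, of y a2] by blast
    have G1: "G = sum_list (map cycle_edges Cs) + I" using G0 sCs by simp
    have Icase: "I = {#} \<or> (perfect_matching n I \<and> y < n \<and> a2 < n)" using Ich yn a2n by auto
    obtain MT me Isw where MT: "MT = {} \<or> MT = {0::nat,1}" and mtouch: "filter_mset (touch y a2) I = (\<Sum>t\<in>MT. {#me t#})"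
      and msw: "MT = {0,1} \<longrightarrow> Isw + {#me 0, me 1#} = I + {#flip y a2 (me 0), flip y a2 (me 1)#} \<and> perfect_matching n Isw"
      and mI: "I = {#} \<longrightarrow> MT = {}"
      using matching_setup[OF Icase ab] by blast
    define Dd where "Dd = {#{x, a2}, {x, a2}, {a1, y}, {a3, y}#}"
    define fl where "fl = flip y a2"
    define QG where "QG = filter_mset (touch y a2) G"
    define QL where "QL = filter_mset (touch y a2) L"
    have swx: "sw y a2 x = x" "sw y a2 a1 = a1" "sw y a2 a3 = a3" using dist ydist by (auto simp: sw_def)
    have QLe: "QL = {#{a1, a2}, {a2, a3}, {x, y}, {x, y}#}"
    proof -
      have r: "filter_mset (touch y a2) (sum_list (map cycle_edges Rest)) = {#}"
      proof (rule filter_sum_list_none, rule ballI)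
        fix c assume c: "c \<in> set Rest"
        have "a2 \<notin> set c" using restx c A dist by auto
        moreover have "y \<notin> set c" using restx c by auto
        ultimately show "filter_mset (touch y a2) (cycle_edges c) = {#}" by (simp add: filter_touch_ce_none)
      qed
      have p: "filter_mset (touch y a2) (pe (a3 # R' @ [x])) = {#}"
        using dist ydist by (intro filter_touch_pe_none) auto
      show ?thesis unfolding QL_def Lx filter_union_mset r ceA
        using p dist ydist by (simp add: cycle_edges_two touch_def)
    qed
    have fQL: "image_mset fl QL = {#{a1, y}, {y, a3}, {x, a2}, {x, a2}#}"
      using swx by (simp add: QLe fl_def)
    have fDd: "image_mset fl Dd = {#{x, y}, {x, y}, {a1, a2}, {a3, a2}#}"
      using swx by (simp add: Dd_def fl_def)
    have QK: "QG + QL = image_mset fl QG + image_mset fl QL"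
    proof -
      have "QG + QL = filter_mset (touch y a2) (lamKn lam n)" unfolding QG_def QL_def GL[symmetric] by simp
      also have "\<dots> = filter_mset (touch y a2) (image_mset fl (lamKn lam n))" using flip_lamKn[OF yn a2n] by (simp add: fl_def)
      also have "\<dots> = image_mset fl (filter_mset (touch y a2) (lamKn lam n))" by (simp add: fl_def filter_image_flip)
      also have "filter_mset (touch y a2) (lamKn lam n) = QG + QL" unfolding QG_def QL_def GL[symmetric] by simp
      finally show ?thesis by simp
    qed
    have QLD: "QL + Dd = image_mset fl QL + image_mset fl Dd"
      unfolding fQL fDd by (simp add: QLe Dd_def insert_commute add_mset_commute)
    have bal: "QG + image_mset fl Dd = image_mset fl QG + Dd"
    proof -
      have "QG + image_mset fl Dd + image_mset fl QL = QG + (QL + Dd)" using QLD by (simp add: ac_simps)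
      also have "\<dots> = image_mset fl QG + image_mset fl QL + Dd" using QK by (simp add: ac_simps)
      finally show ?thesis by (simp add: ac_simps)
    qed
    have sub: "Dd \<subseteq># QG"
    proof (rule mset_subset_eqI)
      fix e
      have c1: "count QG e + count (image_mset fl Dd) e = count (image_mset fl QG) e + count Dd e"
        using bal by (metis count_union)
      have "count (image_mset fl Dd) e = 0" if "count Dd e > 0"
      proof -
        have "e \<in># Dd" using that by simp
        then have "e \<notin># image_mset fl Dd" unfolding fDd using dist ydist
          by (auto simp: Dd_def doubleton_eq_iff)
        then show ?thesis by (simp add: count_eq_zero_iff)
      qed
      note z = this
      show "count Dd e \<le> count QG e"
      proof (cases "count Dd e > 0")
        case True
        then show ?thesis using z[OF True] c1 by linarith
      next
        case False
        then show ?thesis by linarith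
      qed
    qed
    obtain Cs' I' Xd where Xd: "Xd \<subseteq># Dd" "size Xd = 2" "{x, a2} \<in># Xd"
      and cyc': "\<forall>c\<in>set Cs'. is_cycle_list c" and mlen': "map length Cs' = map length Cs"
      and I': "I' = I \<or> (I' = Isw \<and> MT = {0,1})"
      and ceq: "sum_list (map cycle_edges Cs') + I' + Xd = G + image_mset (flip y a2) Xd"
      using core[OF ab cyc MT mtouch _ G1, of Isw Dd "{x, a2}"] msw bal sub
      by (auto simp: QG_def fl_def Dd_def)
    have fin: "?thesis" if T: "is_cycle_list T" "length T = 3" and cor: "is_cycle_list cor" "length cor + 1 = m"
      "set cor \<subseteq> insert y (set (x # A))" "x \<in> set cor"
      and ident: "image_mset (flip y a2) Xd + cycle_edges T + cycle_edges cor = Xd + cycle_edges (x # A) + cycle_edges [x, y]"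
      for T cor
    proof -
      define L2 where "L2 = cycle_edges cor + sum_list (map cycle_edges Rest)"
      have eq: "(sum_list (map cycle_edges (Cs' @ [T])) + I') + L2 = G + L"
      proof -
        have "(sum_list (map cycle_edges (Cs' @ [T])) + I') + L2 + Xd
          = (sum_list (map cycle_edges Cs') + I' + Xd) + cycle_edges T + cycle_edges cor + sum_list (map cycle_edges Rest)"
          by (simp add: L2_def ac_simps)
        also have "\<dots> = G + (image_mset (flip y a2) Xd + cycle_edges T + cycle_edges cor) + sum_list (map cycle_edges Rest)"
          unfolding ceq by (simp add: ac_simps)
        also have "\<dots> = G + L + Xd" unfolding ident Lx by (simp add: ac_simps)
        finally show ?thesis by simp
      qed
      have lens: "mset (map (\<lambda>vs. int (length vs)) (Cs' @ [T])) = M + {#3#}"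
      proof -
        have "map (\<lambda>vs. int (length vs)) Cs' = map int (map length Cs')" by simp
        also have "\<dots> = map int (map length Cs0)" using mlen' mlen by simp
        also have "\<dots> = map (\<lambda>vs. int (length vs)) Cs0" by simp
        finally show ?thesis using len0 T(2) by simp
      qed
      have fl2: "is_flower (M' + {#int (length cor)#}) L2"
        unfolding L2_def
      proof (rule flower_build[OF cor(1)])
        show "\<forall>c\<in>set Rest. is_cycle_list c \<and> set c \<inter> set cor = {x}"
        proof
          fix c assume c: "c \<in> set Rest"
          have "set c \<inter> set (x # A) = {x}" "y \<notin> set c" "x \<in> set c" using restx c by auto
          then show "is_cycle_list c \<and> set c \<inter> set cor = {x}" using restc c cor(3,4) by auto
        qed
      qed (use restp Mlen in auto)
      have pk: "packing_with_leave lam n (M + {#3#}) L2"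
      proof (rule finish[OF GL par eL _ eq _ lens refl])
        show "even (deg L2 v)" for v using fl2 by (rule even_deg_flower)
        show "\<forall>c\<in>set (Cs' @ [T]). is_cycle_list c" using cyc' T by auto
        show "(\<forall>v<n. even (deg G v)) \<and> I' = {#} \<or> (\<forall>v<n. odd (deg G v)) \<and> perfect_matching n I'"
        proof (cases "(\<forall>v<n. even (deg G v)) \<and> I = {#}")
          case True
          then have "MT = {}" using mI by blast
          then have "I' = I" using I' by auto
          then show ?thesis using True by blast
        next
          case False
          then have o: "(\<forall>v<n. odd (deg G v)) \<and> perfect_matching n I" using Ich by blast
          from I' show ?thesis
          proof
            assume "I' = I" then show ?thesis using o by blast
          next
            assume "I' = Isw \<and> MT = {0,1}" then show ?thesis using o msw by blast
          qed
        qed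
      qed
      have "int (length cor) = int m - 1" using cor(2) by simp
      then show ?thesis using pk fl2 unfolding leave_is_flower_def by (intro exI[of _ L2]) simp
    qed
    obtain z where Xdz: "Xd = {#{x, a2}, z#}" and zD: "z \<in># {#{x, a2}, {a1, y}, {a3, y}#}"
    proof -
      obtain X1 where X1: "Xd = add_mset {x, a2} X1" using Xd(3) by (metis multi_member_split)
      have "size X1 = 1" using Xd(2) X1 by simp
      then obtain z where "X1 = {#z#}" using size_1_singleton_mset by blast
      moreover have "X1 \<subseteq># {#{a3, y}, {a1, y}, {x, a2}#}" using Xd(1) X1 by (simp add: Dd_def)
      ultimately show ?thesis using that X1 by auto
    qed
    have pe3: "pe (a3 # R' @ [x]) = pe (a3 # R' @ [x])" ..
    have c1: "is_cycle_list [x, a1, a2]" "is_cycle_list [x, y, a1]" using dist ydist by (auto simp: is_cycle_list_def)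
    have c2: "is_cycle_list (x # a2 # a3 # R')" "is_cycle_list (x # y # a3 # R')"
      using dist ydist lA A by (auto simp: is_cycle_list_def)
    have l2: "length (x # a2 # a3 # R') + 1 = m" "length (x # y # a3 # R') + 1 = m" using lA A by auto
    have s2: "set (x # a2 # a3 # R') \<subseteq> insert y (set (x # A))" "set (x # y # a3 # R') \<subseteq> insert y (set (x # A))"
      using A by auto
    from zD consider "z = {x, a2}" | "z = {a1, y}" | "z = {a3, y}" by auto
    then show ?thesis
    proof cases
      case 1
      show ?thesis
      proof (rule fin[OF c1(1) _ c2(1) l2(1) s2(1)])
        show "image_mset (flip y a2) Xd + cycle_edges [x, a1, a2] + cycle_edges (x # a2 # a3 # R') = Xd + cycle_edges (x # A) + cycle_edges [x, y]"
          unfolding Xdz 1 A using swx by (simp add: cycle_edges_Cons cycle_edges_two) (simp add: insert_commute add_mset_commute)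
      qed auto
    next
      case 2
      show ?thesis
      proof (rule fin[OF c1(2) _ c2(1) l2(1) s2(1)])
        show "image_mset (flip y a2) Xd + cycle_edges [x, y, a1] + cycle_edges (x # a2 # a3 # R') = Xd + cycle_edges (x # A) + cycle_edges [x, y]"
          unfolding Xdz 2 A using swx by (simp add: cycle_edges_Cons cycle_edges_two) (simp add: insert_commute add_mset_commute)
      qed auto
    next
      case 3
      show ?thesis
      proof (rule fin[OF c1(1) _ c2(2) l2(2) s2(2)])
        show "image_mset (flip y a2) Xd + cycle_edges [x, a1, a2] + cycle_edges (x # y # a3 # R') = Xd + cycle_edges (x # A) + cycle_edges [x, y]"
          unfolding Xdz 3 A using swx by (simp add: cycle_edges_Cons cycle_edges_two) (simp add: insert_commute add_mset_commute)
      qed auto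
    qed
  qed
qed


end
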